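(* Let $\Lambda\subset\mathbb{C}$ be a lattice, $p,q\ge2$ integers, $z_0\in\mathbb{C}$, $r\ge2$, and $U(z)=\exp(\zeta(pqz-z_0,\Lambda)N_r)$. Let $A\in GL_r(K_\Lambda)$ and let $T$ be an $r\times r$ matrix of entire functions whose inverse is also a matrix of entire functions, such that $U(z/p)T(z)=A(z)U(z)$. Write in block form $$T=\begin{pmatrix}T'&\beta\\ \gamma&\delta\end{pmatrix},\qquad A=\begin{pmatrix}A'&b\\ c&d\end{pmatrix},$$ with $T',A'$ of size $(r-1)\times(r-1)$, $\gamma,c$ row vectors of length $r-1$ and $\delta,d$ scalar functions. Then $\gamma=c=0$ and $\delta=d$ is a constant.
   Context: $K_\Lambda$ is the field of $\Lambda$-periodic meromorphic functions on $\mathbb{C}$. $\zeta(z,\Lambda)$ is the Weierstrass zeta function (logarithmic derivative of the Weierstrass sigma function; simple poles of residue $1$ exactly at $\Lambda$). $N_r$ is the $r\times r$ matrix with $1$ at positions $(i,i+1)$ and $0$ elsewhere. *)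

theory Defs
  imports "HOL-Complex_Analysis.Complex_Analysis" "Jordan_Normal_Form.Determinant"
begin

definition is_lattice_basis :: "complex \<Rightarrow> complex \<Rightarrow> bool" where
  "is_lattice_basis w1 w2 \<longleftrightarrow> w1 \<noteq> 0 \<and> Im (w2 / w1) \<noteq> 0"

definition lattice :: "complex \<Rightarrow> complex \<Rightarrow> complex set" where
  "lattice w1 w2 = {of_int m * w1 + of_int n * w2 | m n. True}"

text \<open>Weierstrass zeta function of a lattice L (meaningful for z not in L,
  where the defining series converges absolutely).\<close>
definition weierstrass_zeta :: "complex set \<Rightarrow> complex \<Rightarrow> complex" where
  "weierstrass_zeta L z =
     1 / z + (\<Sum>\<^sub>\<infinity> w \<in> L - {0}. 1 / (z - w) + 1 / w + z / w\<^sup>2)"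

definition Nmat :: "nat \<Rightarrow> complex mat" where
  "Nmat r = mat r r (\<lambda>(i,j). if j = i + 1 then 1 else 0)"

text \<open>Matrix exponential of a nilpotent square matrix M of size n
  (M^n = 0), i.e. the exponential series, which terminates.\<close>
definition exp_nilp :: "complex mat \<Rightarrow> complex mat" where
  "exp_nilp M = foldr (\<lambda>k acc. (1 / of_nat (fact k)) \<cdot>\<^sub>m (M ^\<^sub>m k) + acc)
                  [0..<dim_row M] (0\<^sub>m (dim_row M) (dim_row M))"

text \<open>Lambda-periodic meromorphic function (element of K_Lambda), represented
  by its canonical ("nice") representative: value 0 at poles, continuous elsewhere.\<close>
definition elliptic_fun :: "complex set \<Rightarrow> (complex \<Rightarrow> complex) \<Rightarrow> bool" where
  "elliptic_fun L f \<longleftrightarrow> f nicely_meromorphic_on UNIV \<and> (\<forall>w\<in>L. \<forall>z. f (z + w) = f z)"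

end

theory Submission
  imports Defs
begin

definition bb :: "real \<Rightarrow> real" where "bb x = 1 / ((1 + x) * sqrt (1 + x))"

lemma bb_summable: "summable (\<lambda>k::nat. bb (real k))"
proof -
  have s: "summable (\<lambda>n::nat. real n powr (-(3/2)))" by (simp add: summable_real_powr_iff)
  have "summable (\<lambda>n::nat. real (Suc n) powr (-(3/2)))"
    using s by (subst summable_Suc_iff)
  moreover have "real (Suc n) powr (-(3/2)) = bb (real n)" for n
  proof -
    have "real (Suc n) powr (3/2) = real (Suc n) powr (1 + 1/2)" by simp
    also have "\<dots> = real (Suc n) powr 1 * real (Suc n) powr (1/2)" by (rule powr_add)
    also have "\<dots> = (1 + real n) * sqrt (1 + real n)" by (simp add: powr_half_sqrt)
    finally have e: "real (Suc n) powr (3/2) = (1 + real n) * sqrt (1 + real n)" .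
    have i: "real (Suc n) powr (-(3/2)) = inverse (real (Suc n) powr (3/2))" by (rule powr_minus)
    show ?thesis unfolding bb_def using i e by (metis inverse_eq_divide)
  qed
  ultimately show ?thesis by simp
qed

lemma bb_nonneg: "x \<ge> 0 \<Longrightarrow> bb x \<ge> 0" unfolding bb_def by simp

lemma bb_int_sum: assumes "finite P"
  shows "(\<Sum>m\<in>P. bb (real_of_int \<bar>m\<bar>)) \<le> 2 * suminf (\<lambda>k::nat. bb (real k))"
proof -
  let ?S = "suminf (\<lambda>k::nat. bb (real k))"
  have fin: "finite {m\<in>P. 0 \<le> m}" "finite {m\<in>P. m < 0}" using assms by auto
  have "(\<Sum>m\<in>{m\<in>P. 0 \<le> m}. bb (real_of_int \<bar>m\<bar>)) = (\<Sum>k\<in>nat ` {m\<in>P. 0 \<le> m}. bb (real k))"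
    by (subst sum.reindex) (auto simp: inj_on_def intro!: sum.cong)
  also have "\<dots> \<le> ?S" by (rule sum_le_suminf[OF bb_summable]) (use fin in \<open>auto intro: bb_nonneg\<close>)
  finally have 1: "(\<Sum>m\<in>{m\<in>P. 0 \<le> m}. bb (real_of_int \<bar>m\<bar>)) \<le> ?S" .
  have "(\<Sum>m\<in>{m\<in>P. m < 0}. bb (real_of_int \<bar>m\<bar>)) = (\<Sum>k\<in>(\<lambda>m. nat (-m)) ` {m\<in>P. m < 0}. bb (real k))"
    by (subst sum.reindex) (auto simp: inj_on_def intro!: sum.cong)
  also have "\<dots> \<le> ?S" by (rule sum_le_suminf[OF bb_summable]) (use fin in \<open>auto intro: bb_nonneg\<close>)
  finally have 2: "(\<Sum>m\<in>{m\<in>P. m < 0}. bb (real_of_int \<bar>m\<bar>)) \<le> ?S" .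
  have "P = {m\<in>P. 0 \<le> m} \<union> {m\<in>P. m < 0}" by auto
  then have "(\<Sum>m\<in>P. bb (real_of_int \<bar>m\<bar>)) = (\<Sum>m\<in>{m\<in>P. 0 \<le> m}. bb (real_of_int \<bar>m\<bar>)) + (\<Sum>m\<in>{m\<in>P. m < 0}. bb (real_of_int \<bar>m\<bar>))"
    using fin by (subst sum.union_disjoint[symmetric]) auto
  then show ?thesis using 1 2 by linarith
qed

lemma bb_ineq:
  fixes m n :: int assumes "m \<noteq> 0 \<or> n \<noteq> 0"
  shows "1 / (real_of_int (\<bar>m\<bar> + \<bar>n\<bar>))^3 \<le> 8 * bb \<bar>m\<bar> * bb \<bar>n\<bar>"
proof -
  define s where "s = real_of_int (\<bar>m\<bar> + \<bar>n\<bar>)"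
  define a where "a = 1 + real_of_int \<bar>m\<bar>"
  define c where "c = 1 + real_of_int \<bar>n\<bar>"
  have s1: "s \<ge> 1" using assms unfolding s_def by linarith
  have a1: "a \<ge> 1" and c1: "c \<ge> 1" unfolding a_def c_def by auto
  have "a * c \<le> (1 + s)^2" unfolding a_def c_def s_def by (simp add: power2_eq_square algebra_simps)
  also have "\<dots> \<le> (2 * s)^2" using s1 by (intro power_mono) auto
  finally have ac: "a * c \<le> 4 * s^2" by (simp add: power_mult_distrib)
  have "sqrt (a * c) \<le> sqrt (4 * s^2)" using ac by (rule real_sqrt_le_mono)
  also have "\<dots> = 2 * s" using s1 by (simp add: real_sqrt_mult)
  finally have sq: "sqrt (a * c) \<le> 2 * s" .
  have "(a * sqrt a) * (c * sqrt c) = (a * c) * sqrt (a * c)" by (simp add: real_sqrt_mult)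
  also have "\<dots> \<le> (4 * s^2) * (2 * s)" by (rule mult_mono[OF ac sq]) (use a1 c1 in auto)
  also have "\<dots> = 8 * s^3" by (simp add: power2_eq_square power3_eq_cube)
  finally have le: "(a * sqrt a) * (c * sqrt c) \<le> 8 * s^3" .
  have pos: "(a * sqrt a) * (c * sqrt c) > 0" using a1 c1 by simp
  have "1 / s^3 = 8 / (8 * s^3)" using s1 by simp
  also have "\<dots> \<le> 8 / ((a * sqrt a) * (c * sqrt c))"
    using le pos s1 a1 c1 by (intro divide_left_mono mult_pos_pos) auto
  also have "\<dots> = 8 * bb \<bar>m\<bar> * bb \<bar>n\<bar>" unfolding bb_def a_def c_def by simp
  finally show ?thesis unfolding s_def .
qed

locale lat =
  fixes w1 w2 :: complex
  assumes basis: "is_lattice_basis w1 w2"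
begin

abbreviation "Lt \<equiv> lattice w1 w2"

definition Iw where "Iw = Im (cnj w1 * w2)"

lemma w1_nz: "w1 \<noteq> 0" using basis by (simp add: is_lattice_basis_def)

lemma Iw_nz: "Iw \<noteq> 0"
proof -
  have "Im (w2 / w1) \<noteq> 0" using basis by (simp add: is_lattice_basis_def)
  then show ?thesis unfolding Iw_def by (auto simp: Im_divide algebra_simps)
qed

definition cx where "cx z = Im (cnj z * w2) / Iw"
definition cy where "cy z = Im (cnj w1 * z) / Iw"

lemma coord: "z = of_real (cx z) * w1 + of_real (cy z) * w2"
proof -
  have 1: "Im (cnj z * w2) * Re w1 + Im (cnj w1 * z) * Re w2 = Re z * Iw"
    by (simp add: Iw_def algebra_simps)
  have 2: "Im (cnj z * w2) * Im w1 + Im (cnj w1 * z) * Im w2 = Im z * Iw"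
    by (simp add: Iw_def algebra_simps)
  have "cx z * Re w1 + cy z * Re w2 = Re z"
    using 1 Iw_nz unfolding cx_def cy_def by (simp add: add_divide_distrib[symmetric])
  moreover have "cx z * Im w1 + cy z * Im w2 = Im z"
    using 2 Iw_nz unfolding cx_def cy_def by (simp add: add_divide_distrib[symmetric])
  ultimately show ?thesis by (simp add: complex_eq_iff)
qed

lemma cx_lin: "cx (of_real a * w1 + of_real b * w2) = a"
  using Iw_nz unfolding cx_def Iw_def by (auto simp: field_simps algebra_simps)

lemma cy_lin: "cy (of_real a * w1 + of_real b * w2) = b"
  using Iw_nz unfolding cy_def Iw_def by (auto simp: field_simps algebra_simps)

lemma lattice_iff: "z \<in> Lt \<longleftrightarrow> (\<exists>m n::int. z = of_int m * w1 + of_int n * w2)"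
  by (auto simp: lattice_def)

lemma lat_0[simp]: "0 \<in> Lt" unfolding lattice_iff by (rule exI[of _ 0], rule exI[of _ 0]) simp
lemma lat_w1[simp]: "w1 \<in> Lt" unfolding lattice_iff by (rule exI[of _ 1], rule exI[of _ 0]) simp
lemma lat_w2[simp]: "w2 \<in> Lt" unfolding lattice_iff by (rule exI[of _ 0], rule exI[of _ 1]) simp

lemma lat_add[intro]: "x \<in> Lt \<Longrightarrow> y \<in> Lt \<Longrightarrow> x + y \<in> Lt"
  unfolding lattice_iff
proof (elim exE)
  fix m n m' n' :: int
  assume "x = of_int m * w1 + of_int n * w2" "y = of_int m' * w1 + of_int n' * w2"
  then have "x + y = of_int (m+m') * w1 + of_int (n+n') * w2" by (simp add: algebra_simps)
  then show "\<exists>m n::int. x + y = of_int m * w1 + of_int n * w2" by blast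
qed

lemma lat_uminus[intro]: "x \<in> Lt \<Longrightarrow> - x \<in> Lt"
  unfolding lattice_iff
proof (elim exE)
  fix m n :: int
  assume "x = of_int m * w1 + of_int n * w2"
  then have "-x = of_int (-m) * w1 + of_int (-n) * w2" by (simp add: algebra_simps)
  then show "\<exists>m n::int. -x = of_int m * w1 + of_int n * w2" by blast
qed

lemma lat_uminus_iff[simp]: "- x \<in> Lt \<longleftrightarrow> x \<in> Lt"
  using lat_uminus[of x] lat_uminus[of "-x"] by auto

lemma lat_diff[intro]: "x \<in> Lt \<Longrightarrow> y \<in> Lt \<Longrightarrow> x - y \<in> Lt"
  using lat_add[of x "-y"] by auto

lemma lat_of_int[intro]: "x \<in> Lt \<Longrightarrow> of_int k * x \<in> Lt"
  unfolding lattice_iff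
proof (elim exE)
  fix m n :: int
  assume "x = of_int m * w1 + of_int n * w2"
  then have "of_int k * x = of_int (k*m) * w1 + of_int (k*n) * w2" by (simp add: algebra_simps)
  then show "\<exists>m n::int. of_int k * x = of_int m * w1 + of_int n * w2" by blast
qed

lemma lat_of_nat[intro]: "x \<in> Lt \<Longrightarrow> of_nat k * x \<in> Lt"
  using lat_of_int[of x "int k"] by simp

lemma lat_coef: "z = of_int m * w1 + of_int n * w2 \<Longrightarrow> cx z = m \<and> cy z = n"
  using cx_lin[of m n] cy_lin[of m n] by simp

lemma cx_bound: "\<bar>cx z\<bar> \<le> norm z * norm w2 / \<bar>Iw\<bar>"
proof -
  have "\<bar>Im (cnj z * w2)\<bar> \<le> norm z * norm w2"
    using abs_Im_le_cmod[of "cnj z * w2"] by (simp add: norm_mult)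
  then show ?thesis unfolding cx_def using Iw_nz by (simp add: abs_div divide_right_mono)
qed

lemma cy_bound: "\<bar>cy z\<bar> \<le> norm z * norm w1 / \<bar>Iw\<bar>"
proof -
  have "\<bar>Im (cnj w1 * z)\<bar> \<le> norm z * norm w1"
    using abs_Im_le_cmod[of "cnj w1 * z"] by (simp add: norm_mult mult.commute)
  then show ?thesis unfolding cy_def using Iw_nz by (simp add: abs_div divide_right_mono)
qed

definition Kc where "Kc = (norm w1 + norm w2) / \<bar>Iw\<bar>"

lemma Kc_pos: "Kc > 0"
  unfolding Kc_def using Iw_nz w1_nz by (simp add: add_pos_nonneg)

lemma coef_bound: "\<bar>cx z\<bar> + \<bar>cy z\<bar> \<le> Kc * norm z"
proof -
  have "Kc * norm z = norm z * norm w2 / \<bar>Iw\<bar> + norm z * norm w1 / \<bar>Iw\<bar>"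
    unfolding Kc_def by (simp add: add_divide_distrib algebra_simps)
  then show ?thesis using cx_bound[of z] cy_bound[of z] by linarith
qed

lemma lat_coef_bound: "real_of_int (\<bar>m\<bar> + \<bar>n\<bar>) \<le> Kc * norm (of_int m * w1 + of_int n * w2)"
  using coef_bound[of "of_int m * w1 + of_int n * w2"] lat_coef[OF refl, of m n] by simp

lemma lat_norm_ge: assumes "z \<in> Lt" "z \<noteq> 0" shows "1 / Kc \<le> norm z"
proof -
  from assms obtain m n :: int where z: "z = of_int m * w1 + of_int n * w2"
    unfolding lattice_iff by blast
  have "m \<noteq> 0 \<or> n \<noteq> 0" using assms z by auto
  then have "1 \<le> real_of_int (\<bar>m\<bar> + \<bar>n\<bar>)" by linarith
  also have "\<dots> \<le> Kc * norm z" using lat_coef_bound z by simp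
  finally show ?thesis using Kc_pos by (simp add: field_simps)
qed

lemma lat_sep: assumes "x \<in> Lt" "y \<in> Lt" "dist x y < 1 / Kc" shows "x = y"
proof (rule ccontr)
  assume "x \<noteq> y"
  then have "1 / Kc \<le> norm (x - y)" using lat_norm_ge[of "x - y"] assms by auto
  then show False using assms(3) by (simp add: dist_norm)
qed

lemma closed_lat_minus: "closed (Lt - A)"
  by (rule discrete_imp_closed[of "1 / Kc"]) (use Kc_pos lat_sep in auto)

lemma closed_lat: "closed Lt"
  using closed_lat_minus[of "{}"] by simp

lemma countable_lat: "countable Lt"
proof -
  have "Lt = (\<lambda>(m,n). of_int m * w1 + of_int n * w2) ` (UNIV :: (int \<times> int) set)"
    by (auto simp: lattice_def)
  then show ?thesis by simp
qed

lemma lat_finite_ball: "finite {z \<in> Lt. norm z \<le> R}"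
proof -
  define N where "N = \<lceil>Kc * R\<rceil>"
  have "{z \<in> Lt. norm z \<le> R} \<subseteq> (\<lambda>(m,n). of_int m * w1 + of_int n * w2) ` ({-N..N} \<times> {-N..N})"
  proof
    fix z assume z: "z \<in> {z \<in> Lt. norm z \<le> R}"
    then obtain m n :: int where zz: "z = of_int m * w1 + of_int n * w2"
      unfolding lattice_iff by blast
    have "real_of_int (\<bar>m\<bar> + \<bar>n\<bar>) \<le> Kc * R"
      using lat_coef_bound[of m n] zz z Kc_pos
      by (smt (verit, ccfv_SIG) mem_Collect_eq mult_left_mono)
    then have "\<bar>m\<bar> \<le> N" "\<bar>n\<bar> \<le> N" unfolding N_def by linarith+
    then show "z \<in> (\<lambda>(m,n). of_int m * w1 + of_int n * w2) ` ({-N..N} \<times> {-N..N})"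
      using zz by (auto intro!: image_eqI[of _ _ "(m,n)"])
  qed
  then show ?thesis by (rule finite_subset) auto
qed

lemma ev_not_lat_affine:
  assumes "a \<noteq> 0"
  shows "eventually (\<lambda>w. a * w + b \<notin> Lt) (at z)"
proof -
  define C where "C = Lt - {a * z + b}"
  have "open (- C)" unfolding C_def by (intro open_Compl closed_lat_minus)
  moreover have "a * z + b \<in> - C" unfolding C_def by auto
  moreover have "((\<lambda>w. a * w + b) \<longlongrightarrow> a * z + b) (nhds z)"
    by (intro tendsto_intros) (simp add: tendsto_def eventually_nhds_in_open)
  ultimately have "eventually (\<lambda>w. a * w + b \<in> - C) (nhds z)"
    using topological_tendstoD by blast
  then show ?thesis unfolding eventually_at_filter
    by eventually_elim (use assms in \<open>auto simp: C_def\<close>)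
qed

lemma ev_not_lat: "eventually (\<lambda>w. w \<notin> Lt) (at z)"
  using ev_not_lat_affine[of 1 0 z] by simp

lemma lat_periodic_bounded:
  assumes cont: "continuous_on UNIV f" and per: "\<And>z l. l \<in> Lt \<Longrightarrow> f (z + l) = f z"
  shows "bounded (range f)"
proof -
  define K0 where "K0 = (\<lambda>(x,y). of_real x * w1 + of_real y * w2) ` ({0..1::real} \<times> {0..1::real})"
  have "compact K0" unfolding K0_def
    by (intro compact_continuous_image compact_Times) (auto intro!: continuous_intros simp: case_prod_unfold)
  then have cK: "compact (f ` K0)"
    by (intro compact_continuous_image continuous_on_subset[OF cont]) auto
  have "range f \<subseteq> f ` K0"
  proof
    fix u assume "u \<in> range f"
    then obtain z where u: "u = f z" by auto
    define l where "l = of_int \<lfloor>cx z\<rfloor> * w1 + of_int \<lfloor>cy z\<rfloor> * w2"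
    have l: "l \<in> Lt" unfolding l_def lattice_iff by blast
    have "z - l = of_real (cx z - \<lfloor>cx z\<rfloor>) * w1 + of_real (cy z - \<lfloor>cy z\<rfloor>) * w2"
      using coord[of z] unfolding l_def by (simp add: algebra_simps)
    moreover have "cx z - \<lfloor>cx z\<rfloor> \<in> {0..1}" "cy z - \<lfloor>cy z\<rfloor> \<in> {0..1}"
      by (auto simp: frac_lt_1 less_imp_le) linarith+
    ultimately have "z - l \<in> K0" unfolding K0_def by (auto intro!: image_eqI[of _ _ "(cx z - \<lfloor>cx z\<rfloor>, cy z - \<lfloor>cy z\<rfloor>)"])
    moreover have "f z = f (z - l)" using per[of l "z - l"] l by simp
    ultimately show "u \<in> f ` K0" using u by auto
  qed
  then show ?thesis using cK compact_imp_bounded bounded_subset by blast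
qed

lemma lat_periodic_const:
  assumes hol: "f holomorphic_on UNIV" and per: "\<And>z l. l \<in> Lt \<Longrightarrow> f (z + l) = f z"
  shows "\<exists>c. \<forall>z. f z = c"
proof -
  have "continuous_on UNIV f" using hol holomorphic_on_imp_continuous_on by blast
  then have "bounded (range f)" using lat_periodic_bounded per by blast
  then have "f constant_on UNIV" using Liouville_theorem hol by blast
  then show ?thesis unfolding constant_on_def by blast
qed


lemma lat_int_coords:
  assumes "z \<in> Lt"
  shows "z = of_int \<lfloor>cx z\<rfloor> * w1 + of_int \<lfloor>cy z\<rfloor> * w2"
    "cx z = of_int \<lfloor>cx z\<rfloor>" "cy z = of_int \<lfloor>cy z\<rfloor>"
proof -
  from assms obtain m n :: int where zz: "z = of_int m * w1 + of_int n * w2"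
    unfolding lattice_iff by blast
  then have "cx z = m" "cy z = n" using lat_coef by auto
  then show "z = of_int \<lfloor>cx z\<rfloor> * w1 + of_int \<lfloor>cy z\<rfloor> * w2"
    "cx z = of_int \<lfloor>cx z\<rfloor>" "cy z = of_int \<lfloor>cy z\<rfloor>" using zz by simp_all
qed

lemma lat_summable3: "(\<lambda>z. 1 / norm z ^ 3) summable_on (Lt - {0})"
proof (rule nonneg_bdd_above_summable_on)
  define S where "S = suminf (\<lambda>k::nat. bb (real k))"
  define co where "co z = (\<lfloor>cx z\<rfloor>, \<lfloor>cy z\<rfloor>)" for z
  define g where "g p = bb (real_of_int \<bar>fst p\<bar>) * bb (real_of_int \<bar>snd p\<bar>)" for p :: "int \<times> int"
  have gnn: "g p \<ge> 0" for p unfolding g_def by (intro mult_nonneg_nonneg bb_nonneg) auto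
  show "bdd_above (sum (\<lambda>z. 1 / norm z ^ 3) ` {F. F \<subseteq> Lt - {0} \<and> finite F})"
    unfolding bdd_above_def
  proof (intro exI ballI)
    fix x assume "x \<in> sum (\<lambda>z. 1 / norm z ^ 3) ` {F. F \<subseteq> Lt - {0} \<and> finite F}"
    then obtain X where X: "X \<subseteq> Lt - {0}" "finite X" and x: "x = (\<Sum>z\<in>X. 1 / norm z ^ 3)" by auto
    have inj: "inj_on co X"
    proof
      fix a b assume "a \<in> X" "b \<in> X" "co a = co b"
      then have "a \<in> Lt" "b \<in> Lt" "\<lfloor>cx a\<rfloor> = \<lfloor>cx b\<rfloor>" "\<lfloor>cy a\<rfloor> = \<lfloor>cy b\<rfloor>" using X by (auto simp: co_def)
      then show "a = b" using lat_int_coords(1)[of a] lat_int_coords(1)[of b] by metis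
    qed
    have pt: "1 / norm z ^ 3 \<le> Kc^3 * 8 * g (co z)" if "z \<in> X" for z
    proof -
      define m where "m = \<lfloor>cx z\<rfloor>"
      define n where "n = \<lfloor>cy z\<rfloor>"
      have zl: "z \<in> Lt" "z \<noteq> 0" using that X by auto
      have zz: "z = of_int m * w1 + of_int n * w2" using lat_int_coords(1)[OF zl(1)] by (simp add: m_def n_def)
      have mn: "m \<noteq> 0 \<or> n \<noteq> 0" using zz zl by auto
      have b: "real_of_int (\<bar>m\<bar> + \<bar>n\<bar>) \<le> Kc * norm z" using lat_coef_bound[of m n] zz by simp
      have p1: "real_of_int (\<bar>m\<bar> + \<bar>n\<bar>) \<ge> 1" using mn by linarith
      have "real_of_int (\<bar>m\<bar> + \<bar>n\<bar>) ^ 3 \<le> (Kc * norm z) ^ 3"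
        using b p1 by (intro power_mono) auto
      then have "1 / (Kc * norm z) ^ 3 \<le> 1 / real_of_int (\<bar>m\<bar> + \<bar>n\<bar>) ^ 3"
        using p1 Kc_pos zl(2) by (intro divide_left_mono mult_pos_pos) auto
      also have "\<dots> \<le> 8 * g (co z)" using bb_ineq[OF mn] by (simp add: g_def co_def m_def n_def)
      finally have "1 / (Kc * norm z) ^ 3 \<le> 8 * g (co z)" .
      then have "Kc^3 * (1 / (Kc * norm z) ^ 3) \<le> Kc^3 * (8 * g (co z))"
        using Kc_pos by (intro mult_left_mono) auto
      then show ?thesis using Kc_pos by (simp add: power_mult_distrib)
    qed
    have "x \<le> (\<Sum>z\<in>X. Kc^3 * 8 * g (co z))" unfolding x by (rule sum_mono) (rule pt)
    also have "\<dots> = Kc^3 * 8 * (\<Sum>p\<in>co ` X. g p)"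
      by (simp add: sum_distrib_left sum.reindex[OF inj])
    also have "\<dots> \<le> Kc^3 * 8 * (\<Sum>p\<in>(fst ` co ` X) \<times> (snd ` co ` X). g p)"
      using Kc_pos X gnn by (intro mult_left_mono sum_mono2) (auto intro: finite_cartesian_product, (metis fst_conv snd_conv image_eqI)+)
    also have "(\<Sum>p\<in>(fst ` co ` X) \<times> (snd ` co ` X). g p) =
        (\<Sum>m\<in>fst ` co ` X. bb (real_of_int \<bar>m\<bar>)) * (\<Sum>n\<in>snd ` co ` X. bb (real_of_int \<bar>n\<bar>))"
      unfolding g_def by (simp add: sum_product sum.cartesian_product case_prod_unfold)
    also have "\<dots> \<le> (2 * S) * (2 * S)"
      using X bb_int_sum suminf_nonneg[OF bb_summable] bb_nonneg unfolding S_def by (intro mult_mono sum_nonneg bb_nonneg) auto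
    finally show "x \<le> Kc^3 * 8 * ((2 * S) * (2 * S))" using Kc_pos by (simp add: mult_left_mono)
  qed
qed auto

end


context lat begin

definition tz :: "complex \<Rightarrow> complex \<Rightarrow> complex" where "tz l w = 1 / (w - l) + 1 / l + w / l\<^sup>2"
definition tz1 :: "complex \<Rightarrow> complex \<Rightarrow> complex" where "tz1 l w = - 1 / (w - l)^2 + 1 / l^2"
definition tz2 :: "complex \<Rightarrow> complex \<Rightarrow> complex" where "tz2 l w = 2 / (w - l)^3"

lemma tz_deriv: "w \<noteq> l \<Longrightarrow> l \<noteq> 0 \<Longrightarrow> (tz l has_field_derivative tz1 l w) (at w)"
  unfolding tz_def tz1_def
  by (auto intro!: derivative_eq_intros simp: power2_eq_square field_simps)

lemma tz1_deriv: "w \<noteq> l \<Longrightarrow> (tz1 l has_field_derivative tz2 l w) (at w)"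
proof -
  assume wl: "w \<noteq> l"
  have "((\<lambda>w. - 1 / (w - l)^2) has_field_derivative 2 / (w - l)^3) (at w)"
    apply (rule derivative_eq_intros refl)+
    using wl apply (simp_all add: power2_eq_square power3_eq_cube)
    apply (simp add: divide_simps)
    done
  from DERIV_add[OF this DERIV_const[of "1 / l^2"]] show ?thesis
    unfolding tz1_def[abs_def] tz2_def by simp
qed

lemma far_dist:
  assumes "norm w \<le> R" "2 * R \<le> norm l"
  shows "norm (w - l) \<ge> norm l / 2"
proof -
  have "norm l \<le> norm w + norm (w - l)" using norm_triangle_ineq4[of w "w - l"] by simp
  then show ?thesis using assms by linarith
qed

lemma tz_bound:
  assumes "norm w \<le> R" "2 * R \<le> norm l" "l \<noteq> 0"
  shows "norm (tz l w) \<le> 2 * R^2 / norm l ^ 3"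
proof -
  have d: "norm (w - l) \<ge> norm l / 2" using far_dist assms by blast
  have lp: "norm l > 0" using assms by simp
  then have wl: "w - l \<noteq> 0" using d by auto
  have "tz l w = w^2 / (l^2 * (w - l))" unfolding tz_def using wl assms(3)
    by (simp add: divide_simps) (simp add: power2_eq_square algebra_simps)
  then have "norm (tz l w) = norm w ^ 2 / (norm l ^ 2 * norm (w - l))"
    by (simp add: norm_divide norm_mult norm_power)
  also have "\<dots> \<le> R^2 / (norm l ^ 2 * (norm l / 2))"
    using assms d lp by (intro frac_le mult_left_mono power_mono mult_pos_pos) auto
  also have "\<dots> = 2 * R^2 / norm l ^ 3" by (simp add: power2_eq_square power3_eq_cube)
  finally show ?thesis .
qed

lemma tz1_bound:
  assumes "norm w \<le> R" "2 * R \<le> norm l" "l \<noteq> 0"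
  shows "norm (tz1 l w) \<le> 12 * R / norm l ^ 3"
proof -
  have d: "norm (w - l) \<ge> norm l / 2" using far_dist assms by blast
  have lp: "norm l > 0" using assms by simp
  then have wl: "w - l \<noteq> 0" using d by auto
  have R0: "R \<ge> 0" using assms(1) norm_ge_zero order_trans by blast
  have "tz1 l w = w * (w - 2 * l) / (l^2 * (w - l)^2)" unfolding tz1_def using wl assms(3)
    by (simp add: divide_simps) (simp add: power2_eq_square algebra_simps)
  then have "norm (tz1 l w) = norm w * norm (w - 2 * l) / (norm l ^ 2 * norm (w - l) ^ 2)"
    by (simp add: norm_divide norm_mult norm_power)
  also have "\<dots> \<le> (R * (3 * norm l)) / (norm l ^ 2 * (norm l / 2) ^ 2)"
  proof (intro frac_le mult_left_mono power_mono mult_pos_pos mult_mono)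
    have "norm (w - 2 * l) \<le> norm w + norm (2 * l)" by (rule norm_triangle_ineq4)
    moreover have "norm (2 * l) = 2 * norm l" by (simp add: norm_mult)
    ultimately show "norm (w - 2 * l) \<le> 3 * norm l"
      using assms norm_ge_zero[of l] by linarith
  qed (use assms d lp R0 in auto)
  also have "\<dots> = 12 * R / norm l ^ 3" using lp by (simp add: power2_eq_square power3_eq_cube field_simps)
  finally show ?thesis .
qed

lemma tz2_bound:
  assumes "norm w \<le> R" "2 * R \<le> norm l" "l \<noteq> 0"
  shows "norm (tz2 l w) \<le> 16 / norm l ^ 3"
proof -
  have d: "norm (w - l) \<ge> norm l / 2" using far_dist assms by blast
  have lp: "norm l > 0" using assms by simp
  have "norm (tz2 l w) = 2 / norm (w - l) ^ 3" unfolding tz2_def by (simp add: norm_divide norm_power)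
  also have "\<dots> \<le> 2 / (norm l / 2) ^ 3" using d lp by (intro divide_left_mono power_mono mult_pos_pos) auto
  also have "\<dots> = 16 / norm l ^ 3" by (simp add: power3_eq_cube)
  finally show ?thesis .
qed

lemma ulim_lat:
  fixes g :: "complex \<Rightarrow> complex \<Rightarrow> complex"
  assumes small: "\<And>l. l \<in> Lt - {0} \<Longrightarrow> \<exists>B. \<forall>w\<in>K. norm (g l w) \<le> B"
  and big: "\<And>l w. l \<in> Lt - {0} \<Longrightarrow> norm l \<ge> R \<Longrightarrow> w \<in> K \<Longrightarrow> norm (g l w) \<le> C / norm l ^ 3"
  shows "uniform_limit K (\<lambda>X w. \<Sum>l\<in>X. g l w) (\<lambda>w. \<Sum>\<^sub>\<infinity>l\<in>Lt-{0}. g l w) (finite_subsets_at_top (Lt - {0}))"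
proof -
  obtain Bf where Bf: "\<And>l. l \<in> Lt - {0} \<Longrightarrow> \<forall>w\<in>K. norm (g l w) \<le> Bf l" using small by metis
  define M where "M l = (if norm l \<ge> R then C / norm l ^ 3 else Bf l)" for l
  have bound: "\<And>l w. l \<in> Lt-{0} \<Longrightarrow> w \<in> K \<Longrightarrow> norm (g l w) \<le> M l" using Bf big by (auto simp: M_def)
  define A1 where "A1 = {l \<in> Lt - {0}. norm l < R}"
  define A2 where "A2 = {l \<in> Lt - {0}. norm l \<ge> R}"
  have fin: "finite A1"
    by (rule finite_subset[OF _ lat_finite_ball[of R]]) (auto simp: A1_def)
  have s1: "M summable_on A1" using fin by (rule summable_on_finite)
  have "(\<lambda>l. C * (1 / norm l ^ 3)) summable_on (Lt - {0})" using lat_summable3 by (rule summable_on_cmult_right)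
  then have "(\<lambda>l. C * (1 / norm l ^ 3)) summable_on A2" by (rule summable_on_subset_banach) (auto simp: A2_def)
  then have s2: "M summable_on A2" by (subst summable_on_cong[where g = "\<lambda>l. C * (1 / norm l ^ 3)"]) (auto simp: M_def A2_def)
  have "M summable_on (A1 \<union> A2)" by (rule summable_on_Un_disjoint[OF s1 s2]) (auto simp: A1_def A2_def)
  moreover have "A1 \<union> A2 = Lt - {0}" by (auto simp: A1_def A2_def)
  ultimately have "M summable_on Lt - {0}" by simp
  then show ?thesis using bound by (intro Weierstrass_m_test_general) auto
qed

lemma deriv_lat_series:
  fixes g g' :: "complex \<Rightarrow> complex \<Rightarrow> complex"
  assumes r: "r > 0"
  and der: "\<And>l w. l \<in> Lt-{0} \<Longrightarrow> w \<in> cball z r \<Longrightarrow> (g l has_field_derivative g' l w) (at w)"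
  and ul: "uniform_limit (cball z r) (\<lambda>X w. \<Sum>l\<in>X. g l w) (\<lambda>w. \<Sum>\<^sub>\<infinity>l\<in>Lt-{0}. g l w) (finite_subsets_at_top (Lt-{0}))"
  and w: "w \<in> ball z r"
  shows "((\<lambda>w. \<Sum>\<^sub>\<infinity>l\<in>Lt-{0}. g l w) has_field_derivative (\<Sum>\<^sub>\<infinity>l\<in>Lt-{0}. g' l w)) (at w)"
        "(\<lambda>l. g' l w) summable_on Lt-{0}"
proof -
  have ev: "\<forall>\<^sub>F X in finite_subsets_at_top (Lt-{0}). continuous_on (cball z r) (\<lambda>w. \<Sum>l\<in>X. g l w) \<and>
      (\<forall>w\<in>ball z r. ((\<lambda>w. \<Sum>l\<in>X. g l w) has_field_derivative (\<Sum>l\<in>X. g' l w)) (at w))"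
  proof (rule eventually_finite_subsets_at_top_weakI)
    fix X assume X: "finite X" "X \<subseteq> Lt-{0}"
    have d: "((\<lambda>w. \<Sum>l\<in>X. g l w) has_field_derivative (\<Sum>l\<in>X. g' l w)) (at w)" if "w \<in> cball z r" for w
      using X der that by (auto intro!: DERIV_sum)
    have "continuous_on (cball z r) (\<lambda>w. \<Sum>l\<in>X. g l w)"
      using d by (intro continuous_at_imp_continuous_on) (blast intro: DERIV_isCont)
    then show "continuous_on (cball z r) (\<lambda>w. \<Sum>l\<in>X. g l w) \<and>
      (\<forall>w\<in>ball z r. ((\<lambda>w. \<Sum>l\<in>X. g l w) has_field_derivative (\<Sum>l\<in>X. g' l w)) (at w))"
      using d by auto
  qed
  obtain g'' where g'': "\<And>w. w \<in> ball z r \<Longrightarrow> ((\<lambda>w. \<Sum>\<^sub>\<infinity>l\<in>Lt-{0}. g l w) has_field_derivative g'' w) (at w) \<and>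
      ((\<lambda>X. \<Sum>l\<in>X. g' l w) \<longlongrightarrow> g'' w) (finite_subsets_at_top (Lt-{0}))"
    using has_complex_derivative_uniform_limit[where f = "\<lambda>X w. \<Sum>l\<in>X. g l w" and f' = "\<lambda>X w. \<Sum>l\<in>X. g' l w", OF ev ul _ r] by auto
  have hs: "((\<lambda>l. g' l w) has_sum g'' w) (Lt-{0})" using g''[OF w] unfolding has_sum_def by auto
  then have "(\<Sum>\<^sub>\<infinity>l\<in>Lt-{0}. g' l w) = g'' w" by (rule infsumI)
  then show "((\<lambda>w. \<Sum>\<^sub>\<infinity>l\<in>Lt-{0}. g l w) has_field_derivative (\<Sum>\<^sub>\<infinity>l\<in>Lt-{0}. g' l w)) (at w)"
    using g''[OF w] by simp
  show "(\<lambda>l. g' l w) summable_on Lt-{0}" using hs by (rule has_sum_imp_summable)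
qed

lemma cont_bounded:
  fixes f :: "complex \<Rightarrow> complex"
  assumes "continuous_on (cball z r) f"
  shows "\<exists>B. \<forall>w\<in>cball z r. norm (f w) \<le> (B::real)"
proof -
  have "compact (f ` cball z r)" using assms by (intro compact_continuous_image) (auto simp: compact_cball)
  then have "bounded (f ` cball z r)" by (rule compact_imp_bounded)
  then show ?thesis unfolding bounded_iff by auto
qed

definition zeta0 where "zeta0 w = (\<Sum>\<^sub>\<infinity>l\<in>Lt-{0}. tz l w)"
definition zeta1 where "zeta1 w = (\<Sum>\<^sub>\<infinity>l\<in>Lt-{0}. tz1 l w)"
definition zeta2 where "zeta2 w = (\<Sum>\<^sub>\<infinity>l\<in>Lt-{0}. tz2 l w)"

lemma zeta0_props:
  assumes w: "w \<notin> Lt - {0}"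
  shows "(zeta0 has_field_derivative zeta1 w) (at w)"
    "(zeta1 has_field_derivative zeta2 w) (at w)"
    "(\<lambda>l. tz2 l w) summable_on Lt - {0}"
proof -
  have "open (- (Lt - {0}))" using closed_lat_minus by (intro open_Compl)
  then obtain e where e: "e > 0" "ball w e \<subseteq> - (Lt - {0})" using w open_contains_ball by blast
  define r where "r = e / 2"
  have r: "r > 0" using e by (simp add: r_def)
  have cb: "cball w r \<subseteq> - (Lt - {0})" using e by (auto simp: r_def subset_iff)
  define R where "R = norm w + r"
  have normu: "norm u \<le> R" if "u \<in> cball w r" for u
    using that norm_triangle_ineq2[of u w] by (auto simp: R_def dist_norm norm_minus_commute)
  have neq: "u \<noteq> l" if "u \<in> cball w r" "l \<in> Lt - {0}" for u l using cb that by auto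
  have ul0: "uniform_limit (cball w r) (\<lambda>X w. \<Sum>l\<in>X. tz l w) (\<lambda>w. \<Sum>\<^sub>\<infinity>l\<in>Lt-{0}. tz l w) (finite_subsets_at_top (Lt - {0}))"
  proof (rule ulim_lat[where R = "2 * R" and C = "2 * R^2"])
    fix l assume l: "l \<in> Lt - {0}"
    have "continuous_on (cball w r) (tz l)"
      using neq l by (intro continuous_at_imp_continuous_on) (blast intro: DERIV_isCont tz_deriv)
    then show "\<exists>B. \<forall>u\<in>cball w r. norm (tz l u) \<le> B" by (rule cont_bounded)
  next
    fix l u assume "l \<in> Lt - {0}" "2 * R \<le> norm l" "u \<in> cball w r"
    then show "norm (tz l u) \<le> 2 * R^2 / norm l ^ 3" using tz_bound normu by auto
  qed
  have ul1: "uniform_limit (cball w r) (\<lambda>X w. \<Sum>l\<in>X. tz1 l w) (\<lambda>w. \<Sum>\<^sub>\<infinity>l\<in>Lt-{0}. tz1 l w) (finite_subsets_at_top (Lt - {0}))"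
  proof (rule ulim_lat[where R = "2 * R" and C = "12 * R"])
    fix l assume l: "l \<in> Lt - {0}"
    have "continuous_on (cball w r) (tz1 l)"
      using neq l by (intro continuous_at_imp_continuous_on) (blast intro: DERIV_isCont tz1_deriv)
    then show "\<exists>B. \<forall>u\<in>cball w r. norm (tz1 l u) \<le> B" by (rule cont_bounded)
  next
    fix l u assume "l \<in> Lt - {0}" "2 * R \<le> norm l" "u \<in> cball w r"
    then show "norm (tz1 l u) \<le> 12 * R / norm l ^ 3" using tz1_bound normu by auto
  qed
  have wb: "w \<in> ball w r" using r by simp
  show "(zeta0 has_field_derivative zeta1 w) (at w)"
    using deriv_lat_series(1)[OF r _ ul0 wb, of tz1] neq tz_deriv
    unfolding zeta0_def[abs_def] zeta1_def by blast
  show "(zeta1 has_field_derivative zeta2 w) (at w)"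
    using deriv_lat_series(1)[OF r _ ul1 wb, of tz2] neq tz1_deriv
    unfolding zeta1_def[abs_def] zeta2_def by blast
  show "(\<lambda>l. tz2 l w) summable_on Lt - {0}"
    using deriv_lat_series(2)[OF r _ ul1 wb, of tz2] neq tz1_deriv by blast
qed


definition Z where "Z w = weierstrass_zeta Lt w"
definition Z1 where "Z1 w = tz1 0 w + zeta1 w"
definition Z2 where "Z2 w = (\<Sum>\<^sub>\<infinity>l\<in>Lt. tz2 l w)"

lemma Z_eq: "Z w = 1 / w + zeta0 w"
  unfolding Z_def weierstrass_zeta_def zeta0_def tz_def by simp

lemma Z_fun: "Z = (\<lambda>w. 1 / w + zeta0 w)"
  by (intro ext) (rule Z_eq)

lemma Z_deriv: assumes "w \<notin> Lt" shows "(Z has_field_derivative Z1 w) (at w)"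
proof -
  have w0: "w \<noteq> 0" using assms by auto
  have "w \<notin> Lt - {0}" using assms by auto
  note d = zeta0_props(1)[OF this]
  have i: "((\<lambda>w. 1 / w) has_field_derivative tz1 0 w) (at w)"
    using w0 unfolding tz1_def by (auto intro!: derivative_eq_intros simp: power2_eq_square)
  show ?thesis unfolding Z_fun Z1_def by (rule DERIV_add[OF i d])
qed

lemma Z1_deriv: assumes "w \<notin> Lt" shows "(Z1 has_field_derivative Z2 w) (at w)"
proof -
  have w0: "w \<noteq> 0" using assms by auto
  have wl: "w \<notin> Lt - {0}" using assms by auto
  note d = zeta0_props(2)[OF wl]
  have i: "(tz1 0 has_field_derivative tz2 0 w) (at w)" using w0 by (intro tz1_deriv)
  have "Z2 w = (\<Sum>\<^sub>\<infinity>l\<in>insert 0 (Lt - {0}). tz2 l w)" unfolding Z2_def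
    by (simp add: insert_absorb)
  also have "\<dots> = tz2 0 w + zeta2 w" unfolding zeta2_def
    by (rule infsum_insert[OF zeta0_props(3)[OF wl]]) simp
  finally show ?thesis unfolding Z1_def[abs_def] using DERIV_add[OF i d] by simp
qed

lemma bij_shift: "l0 \<in> Lt \<Longrightarrow> bij_betw (\<lambda>l. l + l0) Lt Lt"
  by (rule bij_betw_byWitness[where f' = "\<lambda>l. l - l0"]) auto

lemma Z2_periodic: assumes "l0 \<in> Lt" shows "Z2 (w + l0) = Z2 w"
proof -
  have "Z2 w = (\<Sum>\<^sub>\<infinity>l\<in>Lt. tz2 (l + l0) (w + l0))" unfolding Z2_def tz2_def by (simp add: algebra_simps)
  also have "\<dots> = (\<Sum>\<^sub>\<infinity>l\<in>Lt. tz2 l (w + l0))"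
    by (rule infsum_reindex_bij_betw[OF bij_shift[OF assms], where f = "\<lambda>l. tz2 l (w + l0)"])
  finally show ?thesis unfolding Z2_def by simp
qed

lemma bij_neg: "bij_betw uminus (Lt - {0}) (Lt - {0})"
  by (rule bij_betw_byWitness[where f' = uminus]) auto

lemma Z_odd: "Z (- w) = - Z w"
proof -
  have e: "tz l (- w) = - tz (- l) w" for l
  proof -
    have "-w - l = -(w + l)" by simp
    then have h: "1 / (- w - l) = - (1 / (w + l))" using divide_minus_right[of 1 "w + l"] by metis
    show ?thesis unfolding tz_def h by (simp add: algebra_simps)
  qed
  have "zeta0 (- w) = (\<Sum>\<^sub>\<infinity>l\<in>Lt-{0}. - tz (- l) w)" unfolding zeta0_def e ..
  also have "\<dots> = - (\<Sum>\<^sub>\<infinity>l\<in>Lt-{0}. tz (- l) w)" by (rule infsum_uminus)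
  also have "(\<Sum>\<^sub>\<infinity>l\<in>Lt-{0}. tz (- l) w) = zeta0 w"
    unfolding zeta0_def by (rule infsum_reindex_bij_betw[OF bij_neg, where f = "\<lambda>l. tz l w"])
  finally show ?thesis unfolding Z_eq by simp
qed

lemma zeta0_holo: "zeta0 holomorphic_on (- (Lt - {0}))"
proof -
  have "open (- (Lt - {0}))" using closed_lat_minus by (intro open_Compl)
  then show ?thesis using zeta0_props(1) by (subst holomorphic_on_open) auto
qed

lemma ball_lat: "ball 0 (1 / Kc) \<subseteq> - (Lt - {0})"
  using lat_norm_ge by (force simp: dist_norm)

end


lemma cont_eq_ev:
  fixes f g :: "complex \<Rightarrow> complex"
  assumes "isCont f z" "isCont g z" "eventually (\<lambda>w. f w = g w) (at z)"
  shows "f z = g z"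
proof -
  have "(f \<longlongrightarrow> f z) (at z)" using assms(1) by (simp add: isCont_def)
  then have "(g \<longlongrightarrow> f z) (at z)" using assms(3) by (rule Lim_transform_eventually)
  moreover have "(g \<longlongrightarrow> g z) (at z)" using assms(2) by (simp add: isCont_def)
  ultimately show ?thesis using tendsto_unique[OF trivial_limit_at] by blast
qed

lemma ev_affine:
  fixes a b z :: complex
  assumes "eventually P (at (a * z + b))" "a \<noteq> 0"
  shows "eventually (\<lambda>w. P (a * w + b)) (at z)"
proof -
  from assms(1) obtain d where d: "d > 0" "\<And>x. x \<noteq> a * z + b \<Longrightarrow> dist x (a * z + b) < d \<Longrightarrow> P x"
    unfolding eventually_at by auto
  have "d / norm a > 0" using d assms(2) by simp
  moreover have "P (a * w + b)" if "w \<noteq> z" "dist w z < d / norm a" for w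
  proof (rule d(2))
    show "a * w + b \<noteq> a * z + b" using that assms(2) by simp
    have "dist (a * w + b) (a * z + b) = norm a * dist w z"
      by (simp add: dist_norm norm_mult[symmetric] algebra_simps)
    also have "\<dots> < norm a * (d / norm a)" using that assms(2) by (intro mult_strict_left_mono) auto
    also have "\<dots> = d" using assms(2) by simp
    finally show "dist (a * w + b) (a * z + b) < d" .
  qed
  ultimately show ?thesis unfolding eventually_at by blast
qed

lemma ev_shift:
  fixes l z :: complex
  assumes "eventually P (at (z + l))"
  shows "eventually (\<lambda>w. P (w + l)) (at z)"
  using ev_affine[of P 1 z l] assms by simp

lemma ev_exists: "eventually P (at (z::complex)) \<Longrightarrow> \<exists>w. P w"
  using eventually_happens[of P "at z"] by auto

lemma deriv_periodic:
  fixes f :: "complex \<Rightarrow> complex"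
  assumes "\<And>z. f (z + l) = f z"
  shows "deriv f (z + l) = deriv f z"
proof -
  have "deriv f (z + l) = (SOME D. (f has_field_derivative D) (at (z + l)))" by (simp add: deriv_def)
  also have "\<dots> = (SOME D. ((\<lambda>w. f (w + l)) has_field_derivative D) (at z))" by (simp add: DERIV_shift)
  also have "(\<lambda>w. f (w + l)) = f" using assms by (intro ext) auto
  finally show ?thesis by (simp add: deriv_def)
qed


lemma lim_lemma:
  fixes A B R :: "complex \<Rightarrow> complex"
  assumes A: "(A has_field_derivative DA) (at z)" "A z = 0" and R: "isCont R 0"
  and B: "eventually (\<lambda>w. B w = 1 / (w - z) + R (w - z)) (at z)"
  shows "((\<lambda>w. A w * B w) \<longlongrightarrow> DA) (at z)"
proof -
  have 1: "((\<lambda>w. (A w - A z) / (w - z)) \<longlongrightarrow> DA) (at z)"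
    using A(1) by (simp add: has_field_derivative_iff)
  have c: "isCont (\<lambda>w. R (w - z)) z"
    using isCont_o2[where f = "\<lambda>w. w - z" and a = z and g = R] R by (auto intro!: continuous_intros)
  have "isCont (\<lambda>w. A w * R (w - z)) z" using DERIV_isCont[OF A(1)] c by (intro continuous_intros)
  then have 2: "((\<lambda>w. A w * R (w - z)) \<longlongrightarrow> 0) (at z)"
    using A(2) unfolding isCont_def by simp
  have "((\<lambda>w. (A w - A z) / (w - z) + A w * R (w - z)) \<longlongrightarrow> DA + 0) (at z)"
    by (intro tendsto_add 1 2)
  moreover have "eventually (\<lambda>w. (A w - A z) / (w - z) + A w * R (w - z) = A w * B w) (at z)"
    using B by eventually_elim (use A(2) in \<open>simp add: algebra_simps\<close>)
  ultimately show ?thesis using Lim_transform_eventually by fastforce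
qed

context lat begin

lemma open_nlat: "open (- Lt)" using closed_lat by (rule open_Compl)

lemma connected_nlat: "connected (- Lt)"
proof -
  have "connected (UNIV - Lt)"
    by (rule connected_open_diff_countable) (auto simp: countable_lat)
  then show ?thesis by (simp add: Compl_eq_Diff_UNIV)
qed

lemma per_lift:
  fixes \<psi> \<psi>' :: "complex \<Rightarrow> complex" and N :: nat
  assumes der: "\<And>w. w \<notin> Lt \<Longrightarrow> (\<psi> has_field_derivative \<psi>' w) (at w)"
  and per': "\<And>w l. w \<notin> Lt \<Longrightarrow> l \<in> Lt \<Longrightarrow> \<psi>' (w + l) = \<psi>' w"
  and wit: "\<And>l. l \<in> Lt \<Longrightarrow> \<exists>w. w \<notin> Lt \<and> \<psi> (w + of_nat N * l) = \<psi> w"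
  and N: "N > 0"
  and l: "l \<in> Lt"
  shows "\<And>w. w \<notin> Lt \<Longrightarrow> \<psi> (w + l) = \<psi> w"
proof -
  define D where "D w = \<psi> (w + l) - \<psi> w" for w
  have dD: "(D has_field_derivative 0) (at w)" if "w \<in> - Lt" for w
  proof -
    have wl: "w + l \<notin> Lt"
    proof
      assume "w + l \<in> Lt" then have "(w + l) - l \<in> Lt" using l by blast
      then show False using that by simp
    qed
    have "((\<lambda>w. \<psi> (w + l)) has_field_derivative \<psi>' (w + l)) (at w)"
      using der[OF wl] by (simp add: DERIV_shift)
    then have "(D has_field_derivative \<psi>' (w + l) - \<psi>' w) (at w)"
      unfolding D_def[abs_def] using der that by (intro DERIV_diff) auto
    then show ?thesis using per' that l by simp
  qed
  have "continuous_on (- Lt) D"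
    using dD by (intro continuous_at_imp_continuous_on) (blast intro: DERIV_isCont)
  then obtain \<delta> where \<delta>: "\<And>w. w \<in> - Lt \<Longrightarrow> D w = \<delta>"
    using DERIV_zero_connected_constant[OF connected_nlat open_nlat finite.emptyI] dD by blast
  have mult: "\<psi> (w + of_nat k * l) - \<psi> w = of_nat k * \<delta>" if "w \<notin> Lt" for w k
  proof (induction k)
    case 0 then show ?case by simp
  next
    case (Suc k)
    have "w + of_nat k * l \<notin> Lt"
    proof
      assume "w + of_nat k * l \<in> Lt"
      then have "(w + of_nat k * l) - of_nat k * l \<in> Lt" using l by blast
      then show False using that by simp
    qed
    then have "D (w + of_nat k * l) = \<delta>" using \<delta> by simp
    then have "\<psi> (w + of_nat (Suc k) * l) - \<psi> (w + of_nat k * l) = \<delta>"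
      unfolding D_def by (simp add: algebra_simps)
    then show ?case using Suc by (simp add: algebra_simps)
  qed
  obtain w0 where w0: "w0 \<notin> Lt" "\<psi> (w0 + of_nat N * l) = \<psi> w0" using wit[OF l] by blast
  have "of_nat N * \<delta> = 0" using mult[OF w0(1), of N] w0(2) by simp
  then have "\<delta> = 0" using N by simp
  then show "\<psi> (w + l) = \<psi> w" if "w \<notin> Lt" for w using \<delta>[of w] that unfolding D_def by simp
qed


lemma half_not_lat: "w1 / 2 \<notin> Lt" "w2 / 2 \<notin> Lt" "w2 / 2 - w1 / 2 \<notin> Lt"
proof -
  have nz: False if "real_of_int k = 1/2 \<or> real_of_int k = -1/2" for k :: int
  proof -
    have "real_of_int (2 * k) = 1 \<or> real_of_int (2 * k) = -1" using that by auto
    then have "2 * k = 1 \<or> 2 * k = -1" by (metis of_int_1 of_int_eq_iff of_int_minus)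
    then show False by presburger
  qed
  have e1: "w1 / 2 = of_real (1/2) * w1 + of_real 0 * w2" by simp
  have e2: "w2 / 2 = of_real 0 * w1 + of_real (1/2) * w2" by simp
  have e3: "w2 / 2 - w1 / 2 = of_real (-1/2) * w1 + of_real (1/2) * w2" by simp
  show "w1 / 2 \<notin> Lt"
  proof
    assume "w1 / 2 \<in> Lt"
    then have "cx (w1 / 2) = of_int \<lfloor>cx (w1 / 2)\<rfloor>" by (rule lat_int_coords)
    then show False using cx_lin[of "1/2" 0] e1 nz by metis
  qed
  show "w2 / 2 \<notin> Lt"
  proof
    assume "w2 / 2 \<in> Lt"
    then have "cy (w2 / 2) = of_int \<lfloor>cy (w2 / 2)\<rfloor>" by (rule lat_int_coords)
    then show False using cy_lin[of 0 "1/2"] e2 nz by metis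
  qed
  show "w2 / 2 - w1 / 2 \<notin> Lt"
  proof
    assume "w2 / 2 - w1 / 2 \<in> Lt"
    then have "cy (w2 / 2 - w1 / 2) = of_int \<lfloor>cy (w2 / 2 - w1 / 2)\<rfloor>" by (rule lat_int_coords)
    then show False using cy_lin[of "-1/2" "1/2"] e3 nz by metis
  qed
qed

lemma nlat_shift: "w \<notin> Lt \<Longrightarrow> l \<in> Lt \<Longrightarrow> w + l \<notin> Lt"
proof
  assume "w \<notin> Lt" "l \<in> Lt" "w + l \<in> Lt"
  then have "(w + l) - l \<in> Lt" by blast
  then show False using \<open>w \<notin> Lt\<close> by simp
qed

lemma no_order1:
  fixes F R :: "complex \<Rightarrow> complex" and \<rho> :: real
  assumes Fhol: "F holomorphic_on - Lt"
  and Fper: "\<And>w l. w \<notin> Lt \<Longrightarrow> l \<in> Lt \<Longrightarrow> F (w + l) = F w"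
  and Fodd: "\<And>w. w \<notin> Lt \<Longrightarrow> F (- w) = - F w"
  and Rhol: "R holomorphic_on ball 0 \<rho>" and \<rho>: "\<rho> > 0"
  and FR: "\<And>w. w \<in> ball 0 \<rho> \<Longrightarrow> w \<noteq> 0 \<Longrightarrow> F w = 1 / w + R w"
  shows False
proof -
  define \<omega> where "\<omega> = w1 / 2"
  have Fan: "F analytic_on {z}" if "z \<notin> Lt" for z
    using Fhol open_nlat that analytic_on_open analytic_on_subset by blast
  have Fd: "(F has_field_derivative deriv F z) (at z)" if "z \<notin> Lt" for z
    using holomorphic_on_imp_differentiable_at[OF Fhol open_nlat] that
    by (simp add: DERIV_deriv_iff_field_differentiable)
  have Rc: "isCont R 0"
    using Rhol \<rho> by (meson centre_in_ball continuous_on_eq_continuous_at holomorphic_on_imp_continuous_on open_ball)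
  have nl: "\<omega> \<notin> Lt" "w2 / 2 \<notin> Lt" "w2 / 2 - \<omega> \<notin> Lt" using half_not_lat by (auto simp: \<omega>_def)
  have nlm: "- \<omega> \<notin> Lt" using nl by simp
  have F0: "F \<omega> = 0"
  proof -
    have "F (- \<omega> + w1) = F (- \<omega>)" using Fper[OF nlm lat_w1] .
    moreover have "- \<omega> + w1 = \<omega>" by (simp add: \<omega>_def)
    ultimately have "F \<omega> = - F \<omega>" using Fodd[OF nl(1)] by simp
    then show ?thesis by simp
  qed
  have F02: "F (w2 / 2) = 0"
  proof -
    have nlm2: "- (w2 / 2) \<notin> Lt" using nl by simp
    have "F (- (w2 / 2) + w2) = F (- (w2 / 2))" using Fper[OF nlm2 lat_w2] .
    moreover have "- (w2 / 2) + w2 = w2 / 2" by simp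
    ultimately have "F (w2 / 2) = - F (w2 / 2)" using Fodd[OF nl(2)] by simp
    then show ?thesis by simp
  qed
  have Fz: "F (l - \<omega>) = 0" if "l \<in> Lt" for l
    using Fper[OF nlm that] Fodd[OF nl(1)] F0 by (simp add: algebra_simps)
  have Fz2: "F (l + \<omega>) = 0" if "l \<in> Lt" for l
    using Fper[OF nl(1) that] F0 by (simp add: algebra_simps)
  define S1 where "S1 = {w. w \<notin> Lt \<and> w - \<omega> \<notin> Lt}"
  define G where "G w = F w * F (w - \<omega>)" for w
  have evS1: "eventually (\<lambda>w. w \<in> S1) (at z)" for z
  proof -
    have "eventually (\<lambda>w. 1 * w + (- \<omega>) \<notin> Lt) (at z)" by (rule ev_not_lat_affine) simp
    with ev_not_lat[of z] show ?thesis
      unfolding S1_def by eventually_elim simp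
  qed
  have Gan: "G analytic_on {z}" if "z \<in> S1" for z
  proof -
    have "(\<lambda>w. w - \<omega>) analytic_on {z}" by (intro analytic_intros)
    moreover have "F analytic_on (\<lambda>w. w - \<omega>) ` {z}" using Fan that by (auto simp: S1_def)
    ultimately have "(F \<circ> (\<lambda>w. w - \<omega>)) analytic_on {z}" by (rule analytic_on_compose)
    then have "(\<lambda>w. F (w - \<omega>)) analytic_on {z}" by (simp add: o_def)
    moreover have "F analytic_on {z}" using Fan that by (auto simp: S1_def)
    ultimately show ?thesis unfolding G_def[abs_def] by (intro analytic_on_mult)
  qed
  have Giso: "isolated_singularity_at G z" for z
  proof -
    obtain d where d: "d > 0" "\<And>x. x \<noteq> z \<Longrightarrow> dist x z < d \<Longrightarrow> x \<in> S1"
      using evS1[of z] unfolding eventually_at by auto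
    have "G analytic_on ball z d - {z}"
    proof (subst analytic_on_analytic_at, intro ballI)
      fix x assume x: "x \<in> ball z d - {z}"
      then have "x \<noteq> z" "dist x z < d" by (auto simp: dist_commute)
      then have "x \<in> S1" by (rule d(2))
      then show "G analytic_on {x}" by (rule Gan)
    qed
    then show ?thesis unfolding isolated_singularity_at_def using d by auto
  qed
  have Glim: "\<exists>c. (G \<longlongrightarrow> c) (at z)" for z
  proof (cases "z \<in> S1")
    case True
    then show ?thesis using analytic_at_imp_isCont[OF Gan[OF True]] unfolding isCont_def by blast
  next
    case False
    have evR: "eventually (\<lambda>w. w - z \<in> ball 0 \<rho> \<and> w - z \<noteq> 0) (at z)"
      unfolding eventually_at using \<rho> by (auto intro!: exI[of _ \<rho>] simp: dist_norm norm_minus_commute)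
    show ?thesis
    proof (cases "z \<in> Lt")
      case True
      have A: "((\<lambda>w. F (w - \<omega>)) has_field_derivative deriv F (z - \<omega>)) (at z)"
      proof -
        have "z - \<omega> \<notin> Lt"
        proof
          assume "z - \<omega> \<in> Lt" then have "z - (z - \<omega>) \<in> Lt" using True by blast
          then show False using nl by simp
        qed
        from Fd[OF this] have "(F has_field_derivative deriv F (z - \<omega>)) (at (z + (- \<omega>)))" by simp
        then have "((\<lambda>x. F (x + (- \<omega>))) has_field_derivative deriv F (z - \<omega>)) (at z)"
          by (simp only: DERIV_shift)
        then show ?thesis by simp
      qed
      have A0: "F (z - \<omega>) = 0" using Fz[OF True] .
      have B: "eventually (\<lambda>w. F w = 1 / (w - z) + R (w - z)) (at z)"
        using ev_not_lat[of z] evR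
      proof eventually_elim
        case (elim w)
        have "w - z \<notin> Lt" using elim True nlat_shift[of w "- z"] by auto
        then have "F w = F (w - z)" using Fper[of "w - z" z] True by simp
        then show ?case using FR elim by simp
      qed
      have "((\<lambda>w. F (w - \<omega>) * F w) \<longlongrightarrow> deriv F (z - \<omega>)) (at z)"
        by (rule lim_lemma[OF A _ Rc B]) (use A0 in simp)
      then show ?thesis unfolding G_def by (auto simp: mult.commute)
    next
      case False2: False
      then have zl: "z - \<omega> \<in> Lt" using False by (auto simp: S1_def)
      have A0: "F z = 0" using Fz2[OF zl] by simp
      have B: "eventually (\<lambda>w. F (w - \<omega>) = 1 / (w - z) + R (w - z)) (at z)"
        using evS1[of z] evR
      proof eventually_elim
        case (elim w)
        have "w - \<omega> \<notin> Lt" using elim by (auto simp: S1_def)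
        have "w - z \<notin> Lt"
        proof
          assume "w - z \<in> Lt" from lat_add[OF this zl] have "(w - z) + (z - \<omega>) \<in> Lt" .
          moreover have "(w - z) + (z - \<omega>) = w - \<omega>" by simp
          ultimately show False using \<open>w - \<omega> \<notin> Lt\<close> by simp
        qed
        then have "F (w - \<omega>) = F (w - z)" using Fper[of "w - z" "z - \<omega>"] zl by simp
        then show ?case using FR elim by simp
      qed
      have "((\<lambda>w. F w * F (w - \<omega>)) \<longlongrightarrow> deriv F z) (at z)"
        by (rule lim_lemma[OF Fd[OF False2] A0 Rc B])
      then show ?thesis unfolding G_def by auto
    qed
  qed
  define Gt where "Gt = remove_sings G"
  have Gt_an: "Gt analytic_on {z}" for z
  proof -
    obtain c where c: "(G \<longlongrightarrow> c) (at z)" using Glim[of z] by blast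
    show ?thesis unfolding Gt_def by (rule remove_sings_analytic_at[OF Giso c])
  qed
  have "Gt analytic_on UNIV" by (subst analytic_on_analytic_at) (auto intro: Gt_an)
  then have Gt_hol: "Gt holomorphic_on UNIV" by (rule analytic_imp_holomorphic)
  have GtG: "Gt z = G z" if "z \<in> S1" for z
    unfolding Gt_def using Gan[OF that] by (rule remove_sings_at_analytic)
  have Gper: "Gt (z + l) = Gt z" if l: "l \<in> Lt" for z l
  proof (rule cont_eq_ev[where f = "\<lambda>z. Gt (z + l)"])
    show "isCont (\<lambda>z. Gt (z + l)) z"
      by (rule isCont_o2[where f = "\<lambda>z. z + l" and g = Gt and a = z])
         (auto intro!: continuous_intros analytic_at_imp_isCont[OF Gt_an])
    show "isCont Gt z" using analytic_at_imp_isCont[OF Gt_an] .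
    show "eventually (\<lambda>w. Gt (w + l) = Gt w) (at z)"
      using evS1[of z]
    proof eventually_elim
      case (elim w)
      have w1: "w + l \<in> S1" using elim l nlat_shift[of w l] nlat_shift[of "w - \<omega>" l]
        by (auto simp: S1_def algebra_simps)
      have "G (w + l) = G w" unfolding G_def using Fper[of w l] Fper[of "w - \<omega>" l] elim l
        by (auto simp: S1_def algebra_simps)
      then show ?case using GtG[OF w1] GtG[OF elim] by simp
    qed
  qed
  obtain C where C: "\<And>z. Gt z = C" using lat_periodic_const[OF Gt_hol Gper] by blast
  have s2: "w2 / 2 \<in> S1" using nl by (simp add: S1_def)
  have "C = 0" using C[of "w2 / 2"] GtG[OF s2] F02 unfolding G_def by simp
  then have G0: "G z = 0" if "z \<in> S1" for z using C[of z] GtG[OF that] by simp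
  have ev1: "eventually (\<lambda>w. F w \<noteq> 0 \<and> w \<in> S1) (at 0)"
  proof -
    have "isCont (\<lambda>w. w * R w) 0" using Rc by (intro continuous_intros)
    then have "eventually (\<lambda>w. dist (w * R w) (0 * R 0) < 1) (at 0)"
      unfolding isCont_def by (rule tendstoD) simp
    moreover have "eventually (\<lambda>w. w \<in> ball 0 \<rho> \<and> w \<noteq> 0) (at 0)"
      unfolding eventually_at using \<rho> by (auto intro!: exI[of _ \<rho>] simp: dist_commute)
    ultimately show ?thesis using evS1[of 0]
    proof eventually_elim
      case (elim w)
      have "F w \<noteq> 0"
      proof
        assume "F w = 0"
        then have "1 / w + R w = 0" using FR elim by simp
        then have "w * (1 / w + R w) = 0" by simp
        then have h: "1 + w * R w = 0" using elim by (simp add: algebra_simps)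
        have "w * R w = (1 + w * R w) - 1" by simp
        also have "\<dots> = -1" using h by simp
        finally have "w * R w = -1" .
        then show False using elim by simp
      qed
      then show ?case using elim by simp
    qed
  qed
  have "eventually (\<lambda>w. F (w - \<omega>) = 0 \<and> w - \<omega> \<notin> Lt) (at 0)"
    using ev1
  proof eventually_elim
    case (elim w)
    then show ?case using G0[of w] unfolding G_def by (auto simp: S1_def)
  qed
  then have "eventually (\<lambda>w. F (w + \<omega> - \<omega>) = 0 \<and> w + \<omega> - \<omega> \<notin> Lt) (at (- \<omega>))"
    using ev_shift[of "\<lambda>w. F (w - \<omega>) = 0 \<and> w - \<omega> \<notin> Lt" "- \<omega>" \<omega>] by simp
  then obtain d where d: "d > 0" "\<And>u. u \<noteq> - \<omega> \<Longrightarrow> dist u (- \<omega>) < d \<Longrightarrow> F u = 0 \<and> u \<notin> Lt"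
    unfolding eventually_at by auto
  define s where "s = ball (- \<omega>) d - {- \<omega>}"
  have so: "open s" unfolding s_def by (intro open_Diff) auto
  have sne: "- \<omega> + of_real (d / 2) \<in> s" using d(1) by (simp add: s_def dist_norm)
  have ssub: "s \<subseteq> - Lt" using d by (auto simp: s_def dist_commute)
  have sF: "F u = 0" if "u \<in> s" for u using d that by (auto simp: s_def dist_commute)
  have allz: "F u = 0" if "u \<in> - Lt" for u
    using analytic_continuation_open[OF so open_nlat _ connected_nlat ssub Fhol, of "\<lambda>_. 0"] sne sF that
    by auto
  obtain w where "F w \<noteq> 0 \<and> w \<in> S1" using ev_exists[OF ev1] by blast
  then show False using allz by (auto simp: S1_def)
qed


lemma key:
  fixes E h :: "complex \<Rightarrow> complex" and c z0 :: complex and N :: nat and G :: "complex set"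
  assumes N: "N > 0"
  and E: "E holomorphic_on UNIV"
  and hper: "\<And>z l. l \<in> Lt \<Longrightarrow> h (z + l) = h z"
  and Go: "open G" and Gev: "\<And>z. eventually (\<lambda>w. w \<in> G) (at z)"
  and Gsub: "\<And>z. z \<in> G \<Longrightarrow> of_nat N * z - z0 \<notin> Lt"
  and hhol: "h holomorphic_on G"
  and eq: "\<And>z. z \<in> G \<Longrightarrow> E z = h z + c * Z (of_nat N * z - z0)"
  shows "c = 0"
proof (rule ccontr)
  assume c0: "c \<noteq> 0"
  define n where "n = (of_nat N :: complex)"
  have n0: "n \<noteq> 0" using N by (simp add: n_def)
  have hd: "(h has_field_derivative deriv h z) (at z)" if "z \<in> G" for z
    using holomorphic_derivI[OF hhol Go that] .
  have dhhol: "deriv h holomorphic_on G" using hhol Go by (rule holomorphic_deriv)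
  have hdd: "(deriv h has_field_derivative deriv (deriv h) z) (at z)" if "z \<in> G" for z
    using holomorphic_derivI[OF dhhol Go that] .
  have Ed: "(E has_field_derivative deriv E z) (at z)" for z
    using holomorphic_derivI[OF E open_UNIV] by simp
  have dEhol: "deriv E holomorphic_on UNIV" using E by (rule holomorphic_deriv) simp
  have Edd: "(deriv E has_field_derivative deriv (deriv E) z) (at z)" for z
    using holomorphic_derivI[OF dEhol open_UNIV] by simp
  have e2hol: "deriv (deriv E) holomorphic_on UNIV" using dEhol by (rule holomorphic_deriv) simp
  have lin: "((\<lambda>z. n * z - z0) has_field_derivative n) (at z)" for z
    by (auto intro!: derivative_eq_intros)
  have dE: "deriv E z = deriv h z + c * n * Z1 (n * z - z0)" if z: "z \<in> G" for z
  proof -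
    have nz: "n * z - z0 \<notin> Lt" using Gsub[OF z] by (simp add: n_def)
    have "((\<lambda>z. Z (n * z - z0)) has_field_derivative Z1 (n * z - z0) * n) (at z)"
      by (rule DERIV_chain2[OF Z_deriv[OF nz] lin])
    then have "((\<lambda>z. h z + c * Z (n * z - z0)) has_field_derivative deriv h z + c * (Z1 (n * z - z0) * n)) (at z)"
      by (intro DERIV_add hd z DERIV_cmult)
    then have "(E has_field_derivative deriv h z + c * (Z1 (n * z - z0) * n)) (at z)"
      by (rule has_field_derivative_transform_within_open[OF _ Go z]) (simp add: eq n_def)
    then show ?thesis by (simp add: DERIV_imp_deriv algebra_simps)
  qed
  have dE2: "deriv (deriv E) z = deriv (deriv h) z + c * n^2 * Z2 (n * z - z0)" if z: "z \<in> G" for z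
  proof -
    have nz: "n * z - z0 \<notin> Lt" using Gsub[OF z] by (simp add: n_def)
    have "((\<lambda>z. Z1 (n * z - z0)) has_field_derivative Z2 (n * z - z0) * n) (at z)"
      by (rule DERIV_chain2[OF Z1_deriv[OF nz] lin])
    then have "((\<lambda>z. deriv h z + c * n * Z1 (n * z - z0)) has_field_derivative deriv (deriv h) z + c * n * (Z2 (n * z - z0) * n)) (at z)"
      by (intro DERIV_add hdd z DERIV_cmult)
    then have "(deriv E has_field_derivative deriv (deriv h) z + c * n * (Z2 (n * z - z0) * n)) (at z)"
      by (rule has_field_derivative_transform_within_open[OF _ Go z]) (simp add: dE)
    then show ?thesis by (simp add: DERIV_imp_deriv power2_eq_square algebra_simps)
  qed
  have hper1: "deriv h (z + l) = deriv h z" if "l \<in> Lt" for z l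
    by (rule deriv_periodic) (rule hper[OF that])
  have hper2: "deriv (deriv h) (z + l) = deriv (deriv h) z" if "l \<in> Lt" for z l
    by (rule deriv_periodic) (rule hper1[OF that])
  have nl: "n * l \<in> Lt" if "l \<in> Lt" for l using lat_of_nat[OF that, of N] by (simp add: n_def)
  have e2per: "deriv (deriv E) (z + l) = deriv (deriv E) z" if l: "l \<in> Lt" for z l
  proof (rule cont_eq_ev[where f = "\<lambda>z. deriv (deriv E) (z + l)"])
    have ic: "isCont (deriv (deriv E)) u" for u
      using continuous_on_eq_continuous_at[OF open_UNIV] holomorphic_on_imp_continuous_on[OF e2hol] by blast
    show "isCont (\<lambda>z. deriv (deriv E) (z + l)) z"
      by (rule isCont_o2[where f = "\<lambda>z. z + l" and g = "deriv (deriv E)" and a = z]) (auto intro!: continuous_intros ic)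
    show "isCont (deriv (deriv E)) z" by (rule ic)
    have ev2: "eventually (\<lambda>w. w + l \<in> G) (at z)" using ev_shift[OF Gev[of "z + l"]] .
    show "eventually (\<lambda>w. deriv (deriv E) (w + l) = deriv (deriv E) w) (at z)"
      using Gev[of z] ev2
    proof eventually_elim
      case (elim w)
      have a: "n * (w + l) - z0 = (n * w - z0) + n * l" by (simp add: algebra_simps)
      have "Z2 (n * (w + l) - z0) = Z2 ((n * w - z0) + n * l)" using a by (rule arg_cong)
      also have "\<dots> = Z2 (n * w - z0)" by (rule Z2_periodic[OF nl[OF l]])
      finally have "Z2 (n * (w + l) - z0) = Z2 (n * w - z0)" .
      then show ?case using dE2[OF elim(1)] dE2[OF elim(2)] hper2[OF l] by simp
    qed
  qed
  obtain k where k: "\<And>z. deriv (deriv E) z = k" using lat_periodic_const[OF e2hol e2per] by blast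
  define iv where "iv w = (w + z0) / n" for w
  define e where "e w = E (iv w) / c" for w
  define e1 where "e1 w = deriv E (iv w) / (c * n)" for w
  define \<Phi> where "\<Phi> w = Z w - e w" for w
  define \<Phi>1 where "\<Phi>1 w = Z1 w - e1 w" for w
  define G' where "G' = iv -` G"
  have iv_aff: "iv w = (1 / n) * w + z0 / n" for w by (simp add: iv_def add_divide_distrib)
  have niv: "n * iv w - z0 = w" for w using n0 by (simp add: iv_def)
  have ivs: "iv (w + n * l) = iv w + l" for w l using n0 by (simp add: iv_def field_simps)
  have ivd: "(iv has_field_derivative 1 / n) (at w)" for w
    unfolding iv_aff[abs_def] using n0 by (auto intro!: derivative_eq_intros)
  have ed: "(e has_field_derivative e1 w) (at w)" for w
  proof -
    have "((\<lambda>w. E (iv w)) has_field_derivative deriv E (iv w) * (1 / n)) (at w)"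
      by (rule DERIV_chain2[OF Ed ivd])
    then have "((\<lambda>w. E (iv w) / c) has_field_derivative deriv E (iv w) * (1 / n) / c) (at w)"
      by (rule DERIV_cdivide)
    then show ?thesis unfolding e_def[abs_def] e1_def by (simp add: mult.commute)
  qed
  have e1d: "(e1 has_field_derivative k / (c * n^2)) (at w)" for w
  proof -
    have "((\<lambda>w. deriv E (iv w)) has_field_derivative deriv (deriv E) (iv w) * (1 / n)) (at w)"
      by (rule DERIV_chain2[OF Edd ivd])
    then have "((\<lambda>w. deriv E (iv w) / (c * n)) has_field_derivative deriv (deriv E) (iv w) * (1 / n) / (c * n)) (at w)"
      by (rule DERIV_cdivide)
    then show ?thesis unfolding e1_def[abs_def] using k c0 n0 by (simp add: power2_eq_square field_simps)
  qed
  have \<Phi>d: "(\<Phi> has_field_derivative \<Phi>1 w) (at w)" if "w \<notin> Lt" for w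
    unfolding \<Phi>_def[abs_def] \<Phi>1_def using Z_deriv[OF that] ed by (intro DERIV_diff)
  have \<Phi>1d: "(\<Phi>1 has_field_derivative Z2 w - k / (c * n^2)) (at w)" if "w \<notin> Lt" for w
    unfolding \<Phi>1_def[abs_def] using Z1_deriv[OF that] e1d by (intro DERIV_diff)
  have G'o: "open G'" unfolding G'_def
    by (rule open_vimage[OF Go]) (use n0 in \<open>auto simp: iv_def intro!: continuous_intros\<close>)
  have G'nl: "w \<notin> Lt" if "w \<in> G'" for w using Gsub[of "iv w"] that niv by (simp add: G'_def n_def)
  have \<Phi>G: "\<Phi> w = - h (iv w) / c" if "w \<in> G'" for w
  proof -
    have "E (iv w) = h (iv w) + c * Z w" using eq[of "iv w"] that niv by (simp add: G'_def n_def)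
    then show ?thesis unfolding \<Phi>_def e_def using c0 by (simp add: field_simps)
  qed
  have \<Phi>1G: "\<Phi>1 w = - deriv h (iv w) / (c * n)" if w: "w \<in> G'" for w
  proof -
    have ivG: "iv w \<in> G" using w by (simp add: G'_def)
    have "((\<lambda>w. h (iv w)) has_field_derivative deriv h (iv w) * (1 / n)) (at w)"
      by (rule DERIV_chain2[OF hd[OF ivG] ivd])
    then have d1: "((\<lambda>w. - h (iv w) / c) has_field_derivative - (deriv h (iv w) * (1 / n)) / c) (at w)"
      by (intro DERIV_cdivide DERIV_minus)
    have d2: "((\<lambda>w. - h (iv w) / c) has_field_derivative \<Phi>1 w) (at w)"
      by (rule has_field_derivative_transform_within_open[OF \<Phi>d[OF G'nl[OF w]] G'o w]) (rule \<Phi>G)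
    show ?thesis using DERIV_unique[OF d2 d1] by simp
  qed
  have G'ev: "eventually (\<lambda>w. w \<in> G') (at w0)" for w0
  proof -
    have "eventually (\<lambda>w. w \<in> G) (at ((1 / n) * w0 + z0 / n))" by (rule Gev)
    from ev_affine[OF this] have "eventually (\<lambda>w. (1 / n) * w + z0 / n \<in> G) (at w0)" using n0 by simp
    then show ?thesis unfolding G'_def iv_aff by simp
  qed
  have wit: "\<exists>w. w \<notin> Lt \<and> w \<in> G' \<and> w + n * l \<in> G'" for l
  proof -
    have "eventually (\<lambda>w. w + n * l \<in> G') (at 0)" using ev_shift[OF G'ev[of "0 + n * l"]] .
    with G'ev[of 0] ev_not_lat[of 0]
    have "eventually (\<lambda>w. w \<notin> Lt \<and> w \<in> G' \<and> w + n * l \<in> G') (at 0)"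
      by eventually_elim simp
    then show ?thesis by (rule ev_exists)
  qed
  have \<Phi>1per: "\<Phi>1 (w + l) = \<Phi>1 w" if "w \<notin> Lt" "l \<in> Lt" for w l
  proof (rule per_lift[where \<psi> = \<Phi>1 and \<psi>' = "\<lambda>w. Z2 w - k / (c * n^2)" and N = N, OF \<Phi>1d _ _ N that(2) that(1)])
    show "Z2 (w + l) - k / (c * n^2) = Z2 w - k / (c * n^2)" if "w \<notin> Lt" "l \<in> Lt" for w l
      using Z2_periodic[OF that(2)] by simp
    show "\<exists>w. w \<notin> Lt \<and> \<Phi>1 (w + of_nat N * l) = \<Phi>1 w" if "l \<in> Lt" for l
    proof -
      obtain w where w: "w \<notin> Lt" "w \<in> G'" "w + n * l \<in> G'" using wit by blast
      have "\<Phi>1 (w + n * l) = \<Phi>1 w" using \<Phi>1G[OF w(2)] \<Phi>1G[OF w(3)] ivs hper1[OF that] by simp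
      then show ?thesis using w(1) by (auto simp: n_def)
    qed
  qed
  have \<Phi>per: "\<Phi> (w + l) = \<Phi> w" if "w \<notin> Lt" "l \<in> Lt" for w l
  proof (rule per_lift[where \<psi> = \<Phi> and \<psi>' = \<Phi>1 and N = N, OF \<Phi>d _ _ N that(2) that(1)])
    show "\<Phi>1 (w + l) = \<Phi>1 w" if "w \<notin> Lt" "l \<in> Lt" for w l using \<Phi>1per that .
    show "\<exists>w. w \<notin> Lt \<and> \<Phi> (w + of_nat N * l) = \<Phi> w" if "l \<in> Lt" for l
    proof -
      obtain w where w: "w \<notin> Lt" "w \<in> G'" "w + n * l \<in> G'" using wit by blast
      have "\<Phi> (w + n * l) = \<Phi> w" using \<Phi>G[OF w(2)] \<Phi>G[OF w(3)] ivs hper[OF that] by simp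
      then show ?thesis using w(1) by (auto simp: n_def)
    qed
  qed
  define \<rho> where "\<rho> w = e w + e (- w)" for w
  have ehol: "e holomorphic_on UNIV" using ed by (subst holomorphic_on_open) auto
  have \<rho>hol: "\<rho> holomorphic_on UNIV" unfolding \<rho>_def[abs_def]
    by (intro holomorphic_intros holomorphic_on_compose_gen[of uminus UNIV e UNIV, unfolded o_def, simplified] ehol)
  have \<rho>\<Phi>: "\<rho> w = - (\<Phi> w + \<Phi> (- w))" for w
    unfolding \<rho>_def \<Phi>_def using Z_odd[of w] by simp
  have \<rho>per: "\<rho> (z + l) = \<rho> z" if l: "l \<in> Lt" for z l
  proof (rule cont_eq_ev[where f = "\<lambda>z. \<rho> (z + l)"])
    have ic: "isCont \<rho> u" for u
      using continuous_on_eq_continuous_at[OF open_UNIV] holomorphic_on_imp_continuous_on[OF \<rho>hol] by blast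
    show "isCont (\<lambda>z. \<rho> (z + l)) z"
      by (rule isCont_o2[where f = "\<lambda>z. z + l" and g = \<rho> and a = z]) (auto intro!: continuous_intros ic)
    show "isCont \<rho> z" by (rule ic)
    show "eventually (\<lambda>w. \<rho> (w + l) = \<rho> w) (at z)"
      using ev_not_lat[of z]
    proof eventually_elim
      case (elim w)
      have "- w \<notin> Lt" using elim by simp
      have "\<Phi> (- (w + l)) = \<Phi> (- w + (- l))" by simp
      also have "\<dots> = \<Phi> (- w)" using \<Phi>per[OF \<open>- w \<notin> Lt\<close>, of "- l"] l by simp
      finally show ?case unfolding \<rho>\<Phi> using \<Phi>per[OF elim l] by simp
    qed
  qed
  obtain \<kappa> where \<kappa>: "\<And>z. \<rho> z = \<kappa>" using lat_periodic_const[OF \<rho>hol \<rho>per] by blast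
  define F where "F w = \<Phi> w + \<kappa> / 2" for w
  define R where "R w = zeta0 w - e w + \<kappa> / 2" for w
  have Fhol: "F holomorphic_on - Lt" unfolding F_def[abs_def]
  proof (subst holomorphic_on_open[OF open_nlat], intro ballI exI)
    fix x assume "x \<in> - Lt"
    then show "((\<lambda>w. \<Phi> w + \<kappa> / 2) has_field_derivative \<Phi>1 x + 0) (at x)"
      using \<Phi>d[of x] by (intro DERIV_add DERIV_const) auto
  qed
  have Fper: "F (w + l) = F w" if "w \<notin> Lt" "l \<in> Lt" for w l
    unfolding F_def using \<Phi>per[OF that] by simp
  have Fodd: "F (- w) = - F w" if "w \<notin> Lt" for w
    unfolding F_def using \<rho>\<Phi>[of w] \<kappa>[of w] by (simp add: algebra_simps)
  have Rhol: "R holomorphic_on ball 0 (1 / Kc)" unfolding R_def[abs_def]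
    using holomorphic_on_subset[OF zeta0_holo ball_lat] holomorphic_on_subset[OF ehol]
    by (intro holomorphic_intros) auto
  have FR: "F w = 1 / w + R w" if "w \<in> ball 0 (1 / Kc)" "w \<noteq> 0" for w
    unfolding F_def R_def \<Phi>_def Z_eq by simp
  show False
    by (rule no_order1[OF Fhol Fper Fodd Rhol _ FR]) (use Kc_pos in auto)
qed

end


lemma Nmat_carrier: "Nmat r \<in> carrier_mat r r" by (simp add: Nmat_def)

lemma xN_carrier: "x \<cdot>\<^sub>m Nmat r \<in> carrier_mat r r" by (simp add: Nmat_def)

lemma xN_pow:
  assumes "i < r" "j < r"
  shows "((x \<cdot>\<^sub>m Nmat r) ^\<^sub>m k) $$ (i,j) = (if j = i + k then x^k else 0)"
  using assms
proof (induction k arbitrary: j)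
  case 0
  then show ?case by (simp add: Nmat_def)
next
  case (Suc k)
  let ?A = "x \<cdot>\<^sub>m Nmat r"
  have cA: "?A \<in> carrier_mat r r" by (rule xN_carrier)
  have cP: "?A ^\<^sub>m k \<in> carrier_mat r r" using cA by (rule pow_carrier_mat)
  have "(?A ^\<^sub>m Suc k) $$ (i,j) = (\<Sum>l = 0..<r. (?A ^\<^sub>m k) $$ (i,l) * ?A $$ (l,j))"
  proof -
    have d: "dim_row (?A ^\<^sub>m k) = r" "dim_col ?A = r" "dim_row ?A = r" using cA cP by auto
    show ?thesis using Suc.prems d by (simp add: index_mult_mat scalar_prod_def)
  qed
  also have "\<dots> = (\<Sum>l = 0..<r. if l = i + k then x^k * (x * (if j = l + 1 then 1 else 0)) else 0)"
    using Suc.IH Suc.prems by (intro sum.cong) (auto simp: Nmat_def)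
  also have "\<dots> = (if i + k \<in> {0..<r} then x^k * (x * (if j = i + k + 1 then 1 else 0)) else 0)"
    by (rule sum.delta) simp
  also have "\<dots> = (if j = i + Suc k then x ^ Suc k else 0)"
    using Suc.prems by auto
  finally show ?case .
qed

lemma foldr_carrier:
  assumes "M \<in> carrier_mat r r"
  shows "foldr (\<lambda>k acc. (1 / of_nat (fact k)) \<cdot>\<^sub>m (M ^\<^sub>m k) + acc) ks (0\<^sub>m r r) \<in> carrier_mat r r"
  by (induction ks) (use assms pow_carrier_mat in auto)

lemma foldr_entry:
  assumes "M \<in> carrier_mat r r" "i < r" "j < r"
  shows "foldr (\<lambda>k acc. (1 / of_nat (fact k)) \<cdot>\<^sub>m (M ^\<^sub>m k) + acc) ks (0\<^sub>m r r) $$ (i,j)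
       = (\<Sum>k\<leftarrow>ks. (1 / of_nat (fact k)) * (M ^\<^sub>m k) $$ (i,j))"
proof (induction ks)
  case Nil
  then show ?case using assms by simp
next
  case (Cons k ks)
  have c: "foldr (\<lambda>k acc. (1 / of_nat (fact k)) \<cdot>\<^sub>m (M ^\<^sub>m k) + acc) ks (0\<^sub>m r r) \<in> carrier_mat r r"
    using foldr_carrier[OF assms(1)] .
  have cp: "M ^\<^sub>m k \<in> carrier_mat r r" using assms(1) by (rule pow_carrier_mat)
  show ?case using Cons c cp assms by simp
qed

lemma exp_carrier: "exp_nilp (x \<cdot>\<^sub>m Nmat r) \<in> carrier_mat r r"
  unfolding exp_nilp_def using foldr_carrier[OF xN_carrier[of x r]] by (simp add: Nmat_def)

lemma exp_entry:
  assumes "i < r" "j < r"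
  shows "exp_nilp (x \<cdot>\<^sub>m Nmat r) $$ (i,j) = (if i \<le> j then x^(j-i) / of_nat (fact (j-i)) else 0)"
proof -
  have dr: "dim_row (x \<cdot>\<^sub>m Nmat r) = r" by (simp add: Nmat_def)
  have "exp_nilp (x \<cdot>\<^sub>m Nmat r) $$ (i,j) = (\<Sum>k\<leftarrow>[0..<r]. (1 / of_nat (fact k)) * ((x \<cdot>\<^sub>m Nmat r) ^\<^sub>m k) $$ (i,j))"
    unfolding exp_nilp_def dr using foldr_entry[OF xN_carrier assms] .
  also have "\<dots> = (\<Sum>k\<in>{0..<r}. (1 / of_nat (fact k)) * ((x \<cdot>\<^sub>m Nmat r) ^\<^sub>m k) $$ (i,j))"
    by (simp add: sum_set_upt_conv_sum_list_nat[symmetric])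
  also have "\<dots> = (\<Sum>k\<in>{0..<r}. if k = j - i then (if i \<le> j then x^k / of_nat (fact k) else 0) else 0)"
    using assms by (intro sum.cong) (auto simp: xN_pow)
  also have "\<dots> = (if i \<le> j then x^(j-i) / of_nat (fact (j-i)) else 0)"
    by (subst sum.delta) (use assms in auto)
  finally show ?thesis .
qed

lemma last_row_eq:
  fixes T A :: "complex mat"
  assumes T: "T \<in> carrier_mat r r" and A: "A \<in> carrier_mat r r" and r: "r > 0"
  and eq: "exp_nilp (g \<cdot>\<^sub>m Nmat r) * T = A * exp_nilp (f \<cdot>\<^sub>m Nmat r)"
  and j: "j < r"
  shows "T $$ (r-1, j) = (\<Sum>l = 0..<r. A $$ (r-1, l) * (if l \<le> j then f^(j-l) / of_nat (fact (j-l)) else 0))"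
proof -
  have cg: "exp_nilp (g \<cdot>\<^sub>m Nmat r) \<in> carrier_mat r r" by (rule exp_carrier)
  have cf: "exp_nilp (f \<cdot>\<^sub>m Nmat r) \<in> carrier_mat r r" by (rule exp_carrier)
  have ri: "r - 1 < r" using r by simp
  have "(exp_nilp (g \<cdot>\<^sub>m Nmat r) * T) $$ (r-1, j) = (\<Sum>l = 0..<r. exp_nilp (g \<cdot>\<^sub>m Nmat r) $$ (r-1, l) * T $$ (l, j))"
    using cg T j ri by (simp add: index_mult_mat scalar_prod_def)
  also have "\<dots> = (\<Sum>l = 0..<r. if l = r - 1 then T $$ (r-1, j) else 0)"
    using ri by (intro sum.cong) (auto simp: exp_entry)
  also have "\<dots> = T $$ (r-1, j)" using ri by simp
  finally have 1: "(exp_nilp (g \<cdot>\<^sub>m Nmat r) * T) $$ (r-1, j) = T $$ (r-1, j)" .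
  have "(A * exp_nilp (f \<cdot>\<^sub>m Nmat r)) $$ (r-1, j) = (\<Sum>l = 0..<r. A $$ (r-1, l) * exp_nilp (f \<cdot>\<^sub>m Nmat r) $$ (l, j))"
    using cf A j ri by (simp add: index_mult_mat scalar_prod_def)
  also have "\<dots> = (\<Sum>l = 0..<r. A $$ (r-1, l) * (if l \<le> j then f^(j-l) / of_nat (fact (j-l)) else 0))"
    using j by (intro sum.cong) (auto simp: exp_entry)
  finally show ?thesis using 1 eq by simp
qed


context lat begin

lemma ev_analytic:
  assumes "isolated_singularity_at f z"
  shows "eventually (\<lambda>w. f analytic_on {w}) (at z)"
proof -
  from assms obtain r where r: "r > 0" "f analytic_on ball z r - {z}"
    by (auto simp: isolated_singularity_at_def)
  have "\<forall>w. w \<noteq> z \<and> dist w z < r \<longrightarrow> f analytic_on {w}"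
  proof (intro allI impI)
    fix w assume "w \<noteq> z \<and> dist w z < r"
    then have "w \<in> ball z r - {z}" by (auto simp: dist_commute)
    then show "f analytic_on {w}" using r(2) analytic_on_subset by blast
  qed
  then show ?thesis unfolding eventually_at using r(1) by blast
qed

lemma analytic_nhds:
  assumes "f analytic_on {z}"
  shows "eventually (\<lambda>w. f analytic_on {w}) (nhds z)"
proof -
  from assms obtain e where e: "e > 0" "f holomorphic_on ball z e" unfolding analytic_on_def by auto
  then have "f analytic_on ball z e" by (simp add: analytic_on_open)
  then show ?thesis unfolding eventually_nhds using e(1)
    by (intro exI[of _ "ball z e"]) (auto intro: analytic_on_subset)
qed

lemma per_mero_eq_entire:
  assumes ell: "elliptic_fun Lt a" and t: "t holomorphic_on UNIV"
  and Gev: "\<And>z. eventually (\<lambda>w. w \<in> G) (at z)" and eq: "\<And>z. z \<in> G \<Longrightarrow> t z = a z"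
  shows "\<exists>c. (\<forall>z. t z = c) \<and> (\<forall>z. a z = c)"
proof -
  have aper: "a (z + l) = a z" if "l \<in> Lt" for z l using ell that unfolding elliptic_fun_def by blast
  have tc: "isCont t u" for u
    using continuous_on_eq_continuous_at[OF open_UNIV] holomorphic_on_imp_continuous_on[OF t] by blast
  have tper: "t (z + l) = t z" if l: "l \<in> Lt" for z l
  proof (rule cont_eq_ev[where f = "\<lambda>z. t (z + l)"])
    show "isCont (\<lambda>z. t (z + l)) z"
      by (rule isCont_o2[where f = "\<lambda>z. z + l" and g = t and a = z]) (auto intro!: continuous_intros tc)
    show "isCont t z" by (rule tc)
    have ev2: "eventually (\<lambda>w. w + l \<in> G) (at z)" using ev_shift[OF Gev[of "z + l"]] .
    show "eventually (\<lambda>w. t (w + l) = t w) (at z)"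
      using Gev[of z] ev2 by eventually_elim (simp add: eq aper[OF l])
  qed
  obtain c where c: "\<And>z. t z = c" using lat_periodic_const[OF t tper] by blast
  have "a z = c" for z
  proof -
    have "eventually (\<lambda>w. a w = c) (at z)" using Gev[of z] by eventually_elim (use eq c in metis)
    then have lim: "(a \<longlongrightarrow> c) (at z)" by (rule tendsto_eventually)
    have "a nicely_meromorphic_on UNIV" using ell unfolding elliptic_fun_def by blast
    then have "is_pole a z \<and> a z = 0 \<or> a \<midarrow>z\<rightarrow> a z" unfolding nicely_meromorphic_on_def by blast
    then show ?thesis
    proof
      assume "is_pole a z \<and> a z = 0"
      then have "filterlim a at_infinity (at z)" unfolding is_pole_def by blast
      then show ?thesis using not_tendsto_and_filterlim_at_infinity[OF at_neq_bot lim] by blast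
    next
      assume "a \<midarrow>z\<rightarrow> a z"
      then show ?thesis using tendsto_unique[OF at_neq_bot lim] by simp
    qed
  qed
  then show ?thesis using c by blast
qed

end

theorem lemma5p7:
  fixes w1 w2 z0 :: complex and p q r :: nat
    and A T :: "complex \<Rightarrow> complex mat"
  defines "L \<equiv> lattice w1 w2"
  defines "U \<equiv> (\<lambda>z. exp_nilp (weierstrass_zeta L (of_nat (p * q) * z - z0) \<cdot>\<^sub>m Nmat r))"
  assumes basis: "is_lattice_basis w1 w2"
    and pq: "p \<ge> 2" "q \<ge> 2" and r: "r \<ge> 2"
    and A_dim: "\<And>z. A z \<in> carrier_mat r r"
    and A_ell: "\<And>i j. i < r \<Longrightarrow> j < r \<Longrightarrow> elliptic_fun L (\<lambda>z. A z $$ (i,j))"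
    and A_GL: "\<exists>z. (\<forall>i<r. \<forall>j<r. (\<lambda>x. A x $$ (i,j)) analytic_on {z}) \<and> det (A z) \<noteq> 0"
    and T_dim: "\<And>z. T z \<in> carrier_mat r r"
    and T_entire: "\<And>i j. i < r \<Longrightarrow> j < r \<Longrightarrow> (\<lambda>z. T z $$ (i,j)) holomorphic_on UNIV"
    and T_inv: "\<exists>S. (\<forall>z. S z \<in> carrier_mat r r)
                  \<and> (\<forall>i<r. \<forall>j<r. (\<lambda>z. S z $$ (i,j)) holomorphic_on UNIV)
                  \<and> (\<forall>z. T z * S z = 1\<^sub>m r \<and> S z * T z = 1\<^sub>m r)"
    and eqn: "\<And>z. of_nat (p * q) * z - z0 \<notin> L \<Longrightarrow> of_nat (p * q) * (z / of_nat p) - z0 \<notin> L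
               \<Longrightarrow> (\<forall>i<r. \<forall>j<r. (\<lambda>x. A x $$ (i,j)) analytic_on {z})
               \<Longrightarrow> U (z / of_nat p) * T z = A z * U z"
  shows "(\<forall>z. (case split_block (T z) (r - 1) (r - 1) of (T', \<beta>, \<gamma>, \<delta>) \<Rightarrow> \<gamma> = 0\<^sub>m 1 (r - 1))
            \<and> (case split_block (A z) (r - 1) (r - 1) of (A', b, c, d) \<Rightarrow> c = 0\<^sub>m 1 (r - 1))) \<and>
         (\<exists>k::complex. \<forall>z.
            (case split_block (T z) (r - 1) (r - 1) of (T', \<beta>, \<gamma>, \<delta>) \<Rightarrow> \<delta> = mat 1 1 (\<lambda>_. k))
          \<and> (case split_block (A z) (r - 1) (r - 1) of (A', b, c, d) \<Rightarrow> d = mat 1 1 (\<lambda>_. k)))"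
proof -
  interpret lat w1 w2 using basis by unfold_locales
  have LL: "L = Lt" by (simp add: L_def)
  have n0: "p * q > 0" using pq by simp
  have p0: "p > 0" using pq by simp
  have r0: "r > 0" using r by simp
  define f where "f z = weierstrass_zeta L (of_nat (p * q) * z - z0)" for z
  define a where "a l z = A z $$ (r - 1, l)" for l z
  define t where "t j z = T z $$ (r - 1, j)" for j z
  define G where "G = {z. of_nat (p * q) * z - z0 \<notin> L \<and> of_nat (p * q) * (z / of_nat p) - z0 \<notin> L \<and>
                       (\<forall>i<r. \<forall>j<r. (\<lambda>x. A x $$ (i,j)) analytic_on {z})}"
  have ell: "elliptic_fun Lt (a l)" if "l < r" for l
    using A_ell[of "r - 1" l] that r0 unfolding LL a_def by simp
  have t_hol: "t j holomorphic_on UNIV" if "j < r" for j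
    using T_entire[of "r - 1" j] that r0 unfolding t_def by simp
  have isoA: "isolated_singularity_at (\<lambda>x. A x $$ (i,j)) z" if "i < r" "j < r" for i j z
  proof -
    have "(\<lambda>x. A x $$ (i,j)) nicely_meromorphic_on UNIV" using A_ell[OF that] unfolding elliptic_fun_def by blast
    then have "(\<lambda>x. A x $$ (i,j)) meromorphic_on {z}"
      unfolding nicely_meromorphic_on_def using meromorphic_on_subset by blast
    then show ?thesis by (rule meromorphic_on_isolated_singularity)
  qed
  have evA: "eventually (\<lambda>w. \<forall>i<r. \<forall>j<r. (\<lambda>x. A x $$ (i,j)) analytic_on {w}) (at z)" for z
  proof -
    have "eventually (\<lambda>w. \<forall>i\<in>{..<r}. \<forall>j\<in>{..<r}. (\<lambda>x. A x $$ (i,j)) analytic_on {w}) (at z)"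
      by (intro eventually_ball_finite ballI ev_analytic isoA) auto
    then show ?thesis by (rule eventually_mono) auto
  qed
  have Gev: "eventually (\<lambda>w. w \<in> G) (at z)" for z
  proof -
    have e1: "eventually (\<lambda>w. of_nat (p * q) * w + (- z0) \<notin> Lt) (at z)"
      by (rule ev_not_lat_affine) (use n0 in simp)
    have e2: "eventually (\<lambda>w. (of_nat (p * q) / of_nat p) * w + (- z0) \<notin> Lt) (at z)"
      by (rule ev_not_lat_affine) (use n0 p0 in simp)
    show ?thesis using e1 e2 evA[of z]
      by eventually_elim (use p0 in \<open>simp add: G_def LL\<close>)
  qed
  have Gsub: "of_nat (p * q) * z - z0 \<notin> Lt" if "z \<in> G" for z using that by (simp add: G_def LL)
  have Go: "open G"
  proof -
    have o1: "open {z. of_nat (p * q) * z - z0 \<in> - Lt}"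
      using open_vimage[OF open_nlat, of "\<lambda>z. of_nat (p * q) * z - z0"]
      by (simp add: vimage_def continuous_intros)
    have eqs: "of_nat (p * q) * (z / of_nat p) = (of_nat q * z :: complex)" for z
      using p0 by (simp add: field_simps)
    have o2': "open {z. of_nat q * z - z0 \<in> - Lt}"
      using open_vimage[OF open_nlat, of "\<lambda>z. of_nat q * z - z0"]
      by (simp add: vimage_def continuous_intros)
    have o2: "open {z. of_nat (p * q) * (z / of_nat p) - z0 \<in> - Lt}"
      using o2' by (simp only: eqs)
    have o3: "open {z. \<forall>i<r. \<forall>j<r. (\<lambda>x. A x $$ (i,j)) analytic_on {z}}"
    proof (subst open_subopen, intro ballI)
      fix z assume z: "z \<in> {z. \<forall>i<r. \<forall>j<r. (\<lambda>x. A x $$ (i,j)) analytic_on {z}}"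
      have "eventually (\<lambda>w. \<forall>i\<in>{..<r}. \<forall>j\<in>{..<r}. (\<lambda>x. A x $$ (i,j)) analytic_on {w}) (nhds z)"
        using z by (intro eventually_ball_finite ballI analytic_nhds) auto
      then obtain S where "open S" "z \<in> S" "\<forall>w\<in>S. \<forall>i\<in>{..<r}. \<forall>j\<in>{..<r}. (\<lambda>x. A x $$ (i,j)) analytic_on {w}"
        unfolding eventually_nhds by blast
      then show "\<exists>T. open T \<and> z \<in> T \<and> T \<subseteq> {z. \<forall>i<r. \<forall>j<r. (\<lambda>x. A x $$ (i,j)) analytic_on {z}}"
        by (intro exI[of _ S]) auto
    qed
    have "G = {z. of_nat (p * q) * z - z0 \<in> - Lt} \<inter> {z. of_nat (p * q) * (z / of_nat p) - z0 \<in> - Lt}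
              \<inter> {z. \<forall>i<r. \<forall>j<r. (\<lambda>x. A x $$ (i,j)) analytic_on {z}}"
      by (auto simp: G_def LL)
    then show ?thesis using o1 o2 o3 by (simp add: open_Int)
  qed
  have a_hol: "a l holomorphic_on G" if "l < r" for l
  proof -
    have "a l analytic_on G"
    proof (subst analytic_on_analytic_at, intro ballI)
      fix z assume "z \<in> G"
      then have "(\<lambda>x. A x $$ (r - 1, l)) analytic_on {z}" using that r0 by (auto simp: G_def)
      then show "a l analytic_on {z}" by (simp add: a_def[abs_def])
    qed
    then show ?thesis by (rule analytic_imp_holomorphic)
  qed
  have rowG: "t j z = (\<Sum>l = 0..<r. a l z * (if l \<le> j then f z ^ (j - l) / of_nat (fact (j - l)) else 0))"
    if z: "z \<in> G" and j: "j < r" for j z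
  proof -
    have "U (z / of_nat p) * T z = A z * U z" using z by (intro eqn) (auto simp: G_def)
    then have "exp_nilp (weierstrass_zeta L (of_nat (p * q) * (z / of_nat p) - z0) \<cdot>\<^sub>m Nmat r) * T z
             = A z * exp_nilp (f z \<cdot>\<^sub>m Nmat r)" by (simp add: U_def f_def)
    from last_row_eq[OF T_dim A_dim r0 this j] show ?thesis by (simp add: t_def a_def)
  qed
  have fZ: "f z = Z (of_nat (p * q) * z - z0)" for z by (simp add: f_def Z_def LL)
  have main: "\<forall>l<j. (\<forall>z. a l z = 0) \<and> (\<forall>z. t l z = 0)" if "j \<le> r - 1" for j
    using that
  proof (induction j)
    case 0 then show ?case by simp
  next
    case (Suc j)
    then have IH: "\<And>l z. l < j \<Longrightarrow> a l z = 0" "\<And>l z. l < j \<Longrightarrow> t l z = 0" and j: "j < r - 1" by auto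
    have eqj: "t j z = a j z" if z: "z \<in> G" for z
    proof -
      have "t j z = (\<Sum>l = 0..<r. a l z * (if l \<le> j then f z ^ (j - l) / of_nat (fact (j - l)) else 0))"
        using rowG[OF z] j by simp
      also have "\<dots> = (\<Sum>l = 0..<r. if l = j then a j z else 0)"
        by (intro sum.cong refl) (auto simp: IH)
      also have "\<dots> = a j z" using j by simp
      finally show ?thesis .
    qed
    have jr: "j < r" using j by simp
    have j1: "Suc j < r" using j by linarith
    obtain c where c: "\<And>z. t j z = c" "\<And>z. a j z = c"
      using per_mero_eq_entire[OF ell[OF jr] t_hol[OF jr] Gev eqj] by blast
    have eqj1: "t (Suc j) z = a (Suc j) z + c * Z (of_nat (p * q) * z - z0)" if z: "z \<in> G" for z
    proof -
      have "t (Suc j) z = (\<Sum>l = 0..<r. a l z * (if l \<le> Suc j then f z ^ (Suc j - l) / of_nat (fact (Suc j - l)) else 0))"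
        using rowG[OF z] j by simp
      also have "\<dots> = (\<Sum>l = 0..<r. (if l = j then c * f z else 0) + (if l = Suc j then a (Suc j) z else 0))"
        by (intro sum.cong refl) (auto simp: IH c(2) Suc_diff_le)
      also have "\<dots> = (\<Sum>l = 0..<r. if l = j then c * f z else 0) + (\<Sum>l = 0..<r. if l = Suc j then a (Suc j) z else 0)"
        by (rule sum.distrib)
      also have "\<dots> = c * f z + a (Suc j) z" using jr j1 by simp
      finally show ?thesis by (simp add: fZ)
    qed
    have "c = 0"
    proof (rule key[where N = "p * q" and E = "t (Suc j)" and h = "a (Suc j)" and G = G])
      show "p * q > 0" by (rule n0)
      show "t (Suc j) holomorphic_on UNIV" using j by (intro t_hol) simp
      show "a (Suc j) (z + l) = a (Suc j) z" if "l \<in> Lt" for z l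
        using ell[of "Suc j"] j that unfolding elliptic_fun_def by auto
      show "open G" by (rule Go)
      show "eventually (\<lambda>w. w \<in> G) (at z)" for z by (rule Gev)
      show "of_nat (p * q) * z - z0 \<notin> Lt" if "z \<in> G" for z using Gsub that .
      show "a (Suc j) holomorphic_on G" using j by (intro a_hol) simp
      show "t (Suc j) z = a (Suc j) z + c * Z (of_nat (p * q) * z - z0)" if "z \<in> G" for z
        using eqj1 that .
    qed
    then show ?case using IH c by (auto simp: less_Suc_eq)
  qed
  then have Z0: "\<And>l z. l < r - 1 \<Longrightarrow> a l z = 0" "\<And>l z. l < r - 1 \<Longrightarrow> t l z = 0" by auto
  have rr: "r - 1 < r" using r0 by simp
  have eqr: "t (r - 1) z = a (r - 1) z" if z: "z \<in> G" for z
  proof -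
    have "t (r - 1) z = (\<Sum>l = 0..<r. a l z * (if l \<le> r - 1 then f z ^ (r - 1 - l) / of_nat (fact (r - 1 - l)) else 0))"
      by (rule rowG[OF z rr])
    also have "\<dots> = (\<Sum>l = 0..<r. if l = r - 1 then a (r - 1) z else 0)"
      by (intro sum.cong refl) (auto simp: Z0)
    also have "\<dots> = a (r - 1) z" using r0 by simp
    finally show ?thesis .
  qed
  obtain k where k: "\<And>z. t (r - 1) z = k" "\<And>z. a (r - 1) z = k"
    using per_mero_eq_entire[OF ell[OF rr] t_hol[OF rr] Gev eqr] by blast
  have r1: "r - (r - 1) = 1" "r - (r - Suc 0) = Suc 0" using r0 by simp_all
  have dimT: "dim_row (T z) = r" "dim_col (T z) = r" for z using T_dim[of z] by auto
  have dimA: "dim_row (A z) = r" "dim_col (A z) = r" for z using A_dim[of z] by auto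
  have gT: "mat (r - (r - Suc 0)) (r - Suc 0) (\<lambda>(i, j). T z $$ (i + (r - Suc 0), j)) = 0\<^sub>m (Suc 0) (r - Suc 0)" for z
    by (rule eq_matI) (use Z0(2) in \<open>auto simp: r1 t_def\<close>)
  have gA: "mat (r - (r - Suc 0)) (r - Suc 0) (\<lambda>(i, j). A z $$ (i + (r - Suc 0), j)) = 0\<^sub>m (Suc 0) (r - Suc 0)" for z
    by (rule eq_matI) (use Z0(1) in \<open>auto simp: r1 a_def\<close>)
  have dT: "mat (r - (r - Suc 0)) (r - (r - Suc 0)) (\<lambda>(i, j). T z $$ (i + (r - Suc 0), j + (r - Suc 0))) = mat (Suc 0) (Suc 0) (\<lambda>_. k)" for z
    by (rule eq_matI) (use k(1) in \<open>auto simp: r1 t_def\<close>)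
  have dA: "mat (r - (r - Suc 0)) (r - (r - Suc 0)) (\<lambda>(i, j). A z $$ (i + (r - Suc 0), j + (r - Suc 0))) = mat (Suc 0) (Suc 0) (\<lambda>_. k)" for z
    by (rule eq_matI) (use k(2) in \<open>auto simp: r1 a_def\<close>)
  show ?thesis
    by (auto simp: split_block_def Let_def dimT dimA gT gA dT dA)
qed

end
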